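(* For all integers $M\ge1$, $N\ge1$, with the convention $P(M',N')=0$ when $N'<0$: $$P(M,N)=\begin{cases}P(M,N-1)+q^{N}P(M-1,N), & M\text{ even},\\ P(M,N-1)+q^{N}P(M-1,N)+q^{M+N}P(M+1,N-2), & M\text{ odd}.\end{cases}$$
   Context: Paths: a path of length $L$ is a word in $\{U,D\}$ identified with the lattice path from $(0,0)$ with steps $U=(1,1)$, $D=(1,-1)$; $\lambda(x)$ is its height at $x$. Boxes: for integers $a,b$, $a+b$ odd, the box centered at $(a,b)$ is the closed square with vertices $(a\pm1,b),(a,b\pm1)$. For a path $\lambda$ of length $L$, $S(\lambda)$ = boxes centered at $(a,b)$ with $1\le a\le L$, $b-1\ge\lambda(a)$, $b+1\le a$; boxes with $a=L$ are anchor boxes; for a path $\mu$ weakly above $\lambda$, $\lambda/\mu=S(\lambda)\setminus S(\mu)$. A ballot tile of length $(2n,n')$ is a set of $2n+n'+1$ boxes with centers $c_0,\dots,c_{2n+n'}$ left to right, $c_{i+1}-c_i\in\{(1,\pm1)\}$, none lower than $c_0$, last $n'$ higher than $c_0$. A cover-inclusive ballot tiling of $\lambda/\mu$ is a partition into ballot tiles such that every tile with $n'\ge1$ has its rightmost box an anchor box, and for each tile $\tau$, $\tau-(0,2)$ either lies entirely below $\lambda$ (each translated box has top vertex at or below $\lambda$) or is contained in a single tile. Type BI: no tiles with $n'$ even $\ge2$, and for each $(n,n')$ with $n'$ odd the number of tiles of length $(2n,n')$ is even. A tile with $n'=0$ has $\mathrm{area}=2n+1$, $\mathrm{tiles}=1$;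 with $n'\ge1$, $\mathrm{area}=2n+n'+1$, $\mathrm{tiles}=0$; $\mathrm{art}=\frac12\sum_\tau(\mathrm{area}+\mathrm{tiles})$. $P(M,N)=\sum q^{\mathrm{art}}$ over all cover-inclusive type BI ballot tilings of $\lambda_{M,N}/\mu$, over all paths $\mu$ weakly above $\lambda_{M,N}=D^NU^M$. *)

theory Defs
  imports "HOL-Computational_Algebra.Polynomial" "HOL-Library.Disjoint_Sets"
begin

(* A path is a list of steps; True = U = (1,1), False = D = (1,-1). *)
type_synonym path = "bool list"

(* A box is identified with its center (a,b), a+b odd. *)
type_synonym box = "int \<times> int"

definition height :: "path \<Rightarrow> nat \<Rightarrow> int" where
  "height p x = sum_list (map (\<lambda>s. if s then 1 else -1) (take x p))"

definition Sreg :: "path \<Rightarrow> box set" where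
  "Sreg p = {(a,b). odd (a + b) \<and> 1 \<le> a \<and> a \<le> int (length p)
                 \<and> b - 1 \<ge> height p (nat a) \<and> b + 1 \<le> a}"

definition skew :: "path \<Rightarrow> path \<Rightarrow> box set" where
  "skew lam mu = Sreg lam - Sreg mu"

definition weakly_above :: "path \<Rightarrow> path \<Rightarrow> bool" where
  "weakly_above mu lam \<longleftrightarrow> length mu = length lam \<and>
     (\<forall>x \<le> length lam. height lam x \<le> height mu x)"

definition ballot_tile :: "box set \<Rightarrow> nat \<Rightarrow> nat \<Rightarrow> bool" where
  "ballot_tile tau n n' \<longleftrightarrow>
     (\<exists>c :: nat \<Rightarrow> box.
        tau = c ` {0..2*n+n'} \<and> card tau = 2*n+n'+1 \<and>
        (\<forall>i < 2*n+n'. fst (c (Suc i)) = fst (c i) + 1 \<and> \<bar>snd (c (Suc i)) - snd (c i)\<bar> = 1) \<and>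
        (\<forall>i \<le> 2*n+n'. snd (c i) \<ge> snd (c 0)) \<and>
        snd (c (2*n)) = snd (c 0) \<and>
        (\<forall>i. 2*n < i \<and> i \<le> 2*n+n' \<longrightarrow> snd (c i) > snd (c 0)))"

definition tile_len :: "box set \<Rightarrow> nat \<times> nat" where
  "tile_len tau = (THE nn. ballot_tile tau (fst nn) (snd nn))"

definition tile_area :: "box set \<Rightarrow> nat" where
  "tile_area tau = 2 * fst (tile_len tau) + snd (tile_len tau) + 1"

definition tile_tiles :: "box set \<Rightarrow> nat" where
  "tile_tiles tau = (if snd (tile_len tau) = 0 then 1 else 0)"

(* art = 1/2 sum (area + tiles); integral for type BI tilings *)
definition art :: "box set set \<Rightarrow> nat" where
  "art T = (\<Sum>tau\<in>T. tile_area tau + tile_tiles tau) div 2"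

definition shift_down :: "box set \<Rightarrow> box set" where
  "shift_down tau = (\<lambda>(a,b). (a, b - 2)) ` tau"

definition cover_inclusive_tiling :: "path \<Rightarrow> path \<Rightarrow> box set set \<Rightarrow> bool" where
  "cover_inclusive_tiling lam mu T \<longleftrightarrow>
     partition_on (skew lam mu) T \<and>
     (\<forall>tau\<in>T. \<exists>n n'. ballot_tile tau n n') \<and>
     (\<forall>tau\<in>T. snd (tile_len tau) \<ge> 1 \<longrightarrow>
        (\<forall>c\<in>tau. (\<forall>c'\<in>tau. fst c' \<le> fst c) \<longrightarrow> fst c = int (length lam))) \<and>
     (\<forall>tau\<in>T. (\<forall>(a,b)\<in>shift_down tau. b + 1 \<le> height lam (nat a))
               \<or> (\<exists>tau'\<in>T. shift_down tau \<subseteq> tau'))"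

definition typeBI :: "box set set \<Rightarrow> bool" where
  "typeBI T \<longleftrightarrow>
     (\<forall>tau\<in>T. \<not> (even (snd (tile_len tau)) \<and> snd (tile_len tau) \<ge> 2)) \<and>
     (\<forall>n n'. odd n' \<longrightarrow> even (card {tau\<in>T. tile_len tau = (n, n')}))"

definition lamMN :: "nat \<Rightarrow> nat \<Rightarrow> path" where
  "lamMN M N = replicate N False @ replicate M True"

definition PMN :: "nat \<Rightarrow> nat \<Rightarrow> int poly" where
  "PMN M N = (\<Sum>(mu, T) \<in> {(mu, T). weakly_above mu (lamMN M N) \<and>
                 cover_inclusive_tiling (lamMN M N) mu T \<and> typeBI T}.
               monom 1 (art T))"

end

theory Submission
  imports Defs
begin

section \<open>Heights\<close>

lemma height_0[simp]: "height p 0 = 0"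
  by (simp add: height_def)

lemma height_Nil[simp]: "height [] x = 0"
  by (simp add: height_def)

lemma height_Cons_Suc[simp]: "height (s # p) (Suc x) = (if s then 1 else -1) + height p x"
  by (simp add: height_def)

lemma height_le: "height p x \<le> int x"
proof (induction p arbitrary: x)
  case Nil then show ?case by simp
next
  case (Cons s p)
  then show ?case by (cases x) (auto, smt (verit) Cons.IH)
qed

lemma height_parity: "x \<le> length p \<Longrightarrow> even (height p x + int x)"
proof (induction p arbitrary: x)
  case Nil then show ?case by simp
next
  case (Cons s p)
  show ?case
  proof (cases x)
    case 0 then show ?thesis by simp
  next
    case (Suc y)
    with Cons have "even (height p y + int y)" by simp
    then show ?thesis using Suc by (auto simp: algebra_simps)
  qed
qed

lemma height_ge: "- int x \<le> height p x"
proof (induction p arbitrary: x)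
  case Nil then show ?case by simp
next
  case (Cons s p)
  show ?case
  proof (cases x)
    case (Suc y) then show ?thesis using Cons.IH[of y] by auto
  qed simp
qed

lemma height_Cons_nat: "a \<ge> 1 \<Longrightarrow> height (s # p) (nat a) = (if s then 1 else -1) + height p (nat (a - 1))"
proof -
  assume "a \<ge> 1"
  then have "nat a = Suc (nat (a - 1))" by simp
  then show ?thesis by simp
qed

lemma height_rep_False: "height (replicate N False @ q) x = (if x \<le> N then - int x else - int N + height q (x - N))"
proof (induction N arbitrary: x)
  case 0 then show ?case by simp
next
  case (Suc N)
  then show ?case by (cases x) auto
qed

lemma height_rep_True: "height (replicate M True) x = int (min x M)"
proof (induction M arbitrary: x)
  case 0 then show ?case by simp
next
  case (Suc M)
  then show ?case by (cases x) auto
qed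

lemma height_lam: "x \<le> M + N \<Longrightarrow> height (lamMN M N) x = (if x \<le> N then - int x else int x - 2 * int N)"
  by (auto simp: lamMN_def height_rep_False height_rep_True)

lemma length_lam[simp]: "length (lamMN M N) = M + N"
  by (simp add: lamMN_def)

lemma lam_Suc: "lamMN M (Suc N) = False # lamMN M N"
  by (simp add: lamMN_def)

section \<open>Tile representation\<close>

definition tile_of :: "int \<Rightarrow> (nat \<Rightarrow> int) \<Rightarrow> nat \<Rightarrow> box set" where
  "tile_of a0 f k = (\<lambda>i. (a0 + int i, f i)) ` {0..k}"

definition brep :: "(nat \<Rightarrow> int) \<Rightarrow> nat \<Rightarrow> nat \<Rightarrow> bool" where
  "brep f n n' \<longleftrightarrow> (\<forall>i < 2*n+n'. \<bar>f (Suc i) - f i\<bar> = 1) \<and> (\<forall>i \<le> 2*n+n'. f 0 \<le> f i)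
     \<and> f (2*n) = f 0 \<and> (\<forall>i. 2*n < i \<and> i \<le> 2*n+n' \<longrightarrow> f 0 < f i)"

lemma mem_tile_of: "(x, y) \<in> tile_of a0 f k \<longleftrightarrow> a0 \<le> x \<and> x \<le> a0 + int k \<and> y = f (nat (x - a0))"
  unfolding tile_of_def
proof
  assume "(x, y) \<in> (\<lambda>i. (a0 + int i, f i)) ` {0..k}"
  then show "a0 \<le> x \<and> x \<le> a0 + int k \<and> y = f (nat (x - a0))" by auto
next
  assume h: "a0 \<le> x \<and> x \<le> a0 + int k \<and> y = f (nat (x - a0))"
  then have "(x, y) = (a0 + int (nat (x - a0)), f (nat (x - a0)))" "nat (x - a0) \<in> {0..k}" by auto
  then show "(x, y) \<in> (\<lambda>i. (a0 + int i, f i)) ` {0..k}" by blast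
qed

lemma mem_tile_of': "p \<in> tile_of a0 f k \<longleftrightarrow> a0 \<le> fst p \<and> fst p \<le> a0 + int k \<and> snd p = f (nat (fst p - a0))"
  using mem_tile_of[of "fst p" "snd p"] by simp

lemma tile_of_mem_i: "i \<le> k \<Longrightarrow> (a0 + int i, f i) \<in> tile_of a0 f k"
  by (simp add: tile_of_def)

lemma tile_of_ne[simp]: "tile_of a0 f k \<noteq> {}"
  by (simp add: tile_of_def)

lemma finite_tile_of[simp]: "finite (tile_of a0 f k)"
  by (simp add: tile_of_def)

lemma card_tile_of: "card (tile_of a0 f k) = Suc k"
proof -
  have "inj_on (\<lambda>i. (a0 + int i, f i)) {0..k}" by (auto simp: inj_on_def)
  then show ?thesis unfolding tile_of_def by (simp add: card_image)
qed

lemma ballot_tile_iff: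
  "ballot_tile tau n n' \<longleftrightarrow> (\<exists>a0 f. tau = tile_of a0 f (2*n+n') \<and> brep f n n')"
proof
  assume "ballot_tile tau n n'"
  then obtain c where c: "tau = c ` {0..2*n+n'}" "card tau = 2*n+n'+1"
    "\<forall>i < 2*n+n'. fst (c (Suc i)) = fst (c i) + 1 \<and> \<bar>snd (c (Suc i)) - snd (c i)\<bar> = 1"
    "\<forall>i \<le> 2*n+n'. snd (c i) \<ge> snd (c 0)" "snd (c (2*n)) = snd (c 0)"
    "\<forall>i. 2*n < i \<and> i \<le> 2*n+n' \<longrightarrow> snd (c i) > snd (c 0)"
    unfolding ballot_tile_def by blast
  have fc: "i \<le> 2*n+n' \<Longrightarrow> fst (c i) = fst (c 0) + int i" for i
  proof (induction i)
    case 0 then show ?case by simp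
  next
    case (Suc i)
    then have "i < 2*n+n'" by simp
    then have "fst (c (Suc i)) = fst (c i) + 1" using c(3) by blast
    then show ?case using Suc by simp
  qed
  have "tau = tile_of (fst (c 0)) (\<lambda>i. snd (c i)) (2*n+n')"
    unfolding c(1) tile_of_def
  proof (rule image_cong)
    fix i assume "i \<in> {0..2*n+n'}"
    then show "c i = (fst (c 0) + int i, snd (c i))" using fc[of i] by (simp add: prod_eq_iff)
  qed simp
  moreover have "brep (\<lambda>i. snd (c i)) n n'" unfolding brep_def using c(3-6) by blast
  ultimately show "\<exists>a0 f. tau = tile_of a0 f (2*n+n') \<and> brep f n n'" by blast
next
  assume "\<exists>a0 f. tau = tile_of a0 f (2*n+n') \<and> brep f n n'"
  then obtain a0 f where t: "tau = tile_of a0 f (2*n+n')" and b: "brep f n n'" by blast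
  show "ballot_tile tau n n'" unfolding ballot_tile_def
  proof (rule exI[of _ "\<lambda>i. (a0 + int i, f i)"], intro conjI)
    show "tau = (\<lambda>i. (a0 + int i, f i)) ` {0..2 * n + n'}" using t by (simp add: tile_of_def)
    show "card tau = 2 * n + n' + 1" using t card_tile_of[of a0 f "2*n+n'"] by simp
  qed (use b in \<open>unfold brep_def, auto\<close>)
qed

lemma tile_of_eqD:
  assumes "tile_of a0 f k = tile_of b0 g l"
  shows "a0 = b0" "k = l" "\<And>i. i \<le> k \<Longrightarrow> f i = g i"
proof -
  have m1: "(a0, f 0) \<in> tile_of a0 f k" unfolding mem_tile_of by simp
  have m2: "(b0, g 0) \<in> tile_of b0 g l" unfolding mem_tile_of by simp
  have "b0 \<le> a0" using m1 unfolding assms mem_tile_of by blast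
  moreover have "a0 \<le> b0" using m2 unfolding assms[symmetric] mem_tile_of by blast
  ultimately show a: "a0 = b0" by simp
  show kl: "k = l" using card_tile_of[of a0 f k] card_tile_of[of b0 g l] assms by simp
  fix i assume i: "i \<le> k"
  have "(a0 + int i, f i) \<in> tile_of a0 f k" unfolding mem_tile_of using i by simp
  then have "(a0 + int i, f i) \<in> tile_of b0 g l" unfolding assms .
  then show "f i = g i" using a unfolding mem_tile_of by simp
qed

lemma brep_unique:
  assumes "brep f n n'" "brep f m m'" "2*n+n' = 2*m+m'"
  shows "n = m \<and> n' = m'"
proof -
  have A: "\<And>i. 2*n < i \<Longrightarrow> i \<le> 2*n+n' \<Longrightarrow> f 0 < f i" "f (2*n) = f 0"
    using assms(1) unfolding brep_def by blast+
  have B: "\<And>i. 2*m < i \<Longrightarrow> i \<le> 2*m+m' \<Longrightarrow> f 0 < f i" "f (2*m) = f 0"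
    using assms(2) unfolding brep_def by blast+
  have "\<not> 2*n < 2*m"
  proof
    assume "2*n < 2*m"
    then have "f 0 < f (2*m)" using A(1)[of "2*m"] assms(3) by simp
    then show False using B(2) by simp
  qed
  moreover have "\<not> 2*m < 2*n"
  proof
    assume "2*m < 2*n"
    then have "f 0 < f (2*n)" using B(1)[of "2*n"] assms(3) by simp
    then show False using A(2) by simp
  qed
  ultimately show ?thesis using assms(3) by simp
qed

lemma brep_cong: "(\<And>i. i \<le> 2*n+n' \<Longrightarrow> f i = g i) \<Longrightarrow> brep f n n' \<Longrightarrow> brep g n n'"
  unfolding brep_def
proof (intro conjI allI impI, goal_cases)
  case (1 i) then show ?case by (metis Suc_leI less_imp_le_nat)
next
  case (2 i) then show ?case by (metis le0)
next
  case 3 then show ?case by (metis le0 le_add1)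
next
  case (4 i) then show ?case by (metis le0)
qed

lemma ballot_tile_unique:
  assumes "ballot_tile tau n n'" "ballot_tile tau m m'"
  shows "n = m \<and> n' = m'"
proof -
  obtain a0 f where t: "tau = tile_of a0 f (2*n+n')" and b: "brep f n n'"
    using assms(1) ballot_tile_iff by blast
  obtain b0 g where t': "tau = tile_of b0 g (2*m+m')" and b': "brep g m m'"
    using assms(2) ballot_tile_iff by blast
  note e = tile_of_eqD[OF t[symmetric, THEN trans, OF t']]
  have "brep f m m'" using brep_cong[of m m' g f] b' e by (metis)
  then show ?thesis using brep_unique[OF b _ e(2)] by blast
qed

lemma tile_len_eq: "ballot_tile tau n n' \<Longrightarrow> tile_len tau = (n, n')"
  unfolding tile_len_def
  by (rule the_equality) (auto dest: ballot_tile_unique)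

lemma tile_len_ballot: "ballot_tile tau n n' \<Longrightarrow> ballot_tile tau (fst (tile_len tau)) (snd (tile_len tau))"
  by (simp add: tile_len_eq)

section \<open>Translations\<close>

definition trb :: "int \<Rightarrow> int \<Rightarrow> box \<Rightarrow> box" where
  "trb da db p = (fst p + da, snd p + db)"

definition trs :: "int \<Rightarrow> int \<Rightarrow> box set \<Rightarrow> box set" where
  "trs da db tau = trb da db ` tau"

definition trT :: "int \<Rightarrow> int \<Rightarrow> box set set \<Rightarrow> box set set" where
  "trT da db T = trs da db ` T"

lemma trb_simp[simp]: "trb da db (a, b) = (a + da, b + db)"
  by (simp add: trb_def)

lemma inj_trb: "inj (trb da db)"
  by (auto simp: inj_def trb_def prod_eq_iff)

lemma mem_trs: "p \<in> trs da db tau \<longleftrightarrow> (fst p - da, snd p - db) \<in> tau"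
  unfolding trs_def trb_def by (cases p) force

lemma mem_trs'[simp]: "(a, b) \<in> trs da db tau \<longleftrightarrow> (a - da, b - db) \<in> tau"
  by (simp add: mem_trs)

lemma trs_trs[simp]: "trs da db (trs da' db' tau) = trs (da + da') (db + db') tau"
  by (auto simp: mem_trs algebra_simps)

lemma trs_00[simp]: "trs 0 0 tau = tau"
  by (auto simp: mem_trs)

lemma trs_inv[simp]: "trs (- da) (- db) (trs da db tau) = tau"
  by simp

lemma trs_inv'[simp]: "trs da db (trs (- da) (- db) tau) = tau"
  by simp

lemma inj_trs: "inj (trs da db)"
  by (metis injI trs_inv)

lemma trs_eq_iff[simp]: "trs da db x = trs da db y \<longleftrightarrow> x = y"
  using inj_trs by (auto dest: injD)

lemma trs_subset_iff[simp]: "trs da db x \<subseteq> trs da db y \<longleftrightarrow> x \<subseteq> y"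
  by (auto simp: subset_iff mem_trs) (metis add_diff_cancel prod.collapse)

lemma trs_empty_iff[simp]: "trs da db x = {} \<longleftrightarrow> x = {}"
  by (simp add: trs_def)

lemma trs_empty[simp]: "trs da db {} = {}"
  by (simp add: trs_def)

lemma trs_Un: "trs da db (A \<union> B) = trs da db A \<union> trs da db B"
  by (simp add: trs_def image_Un)

lemma trs_Diff: "trs da db (A - B) = trs da db A - trs da db B"
  by (auto simp: mem_trs)

lemma trs_insert: "trs da db (insert p A) = insert (trb da db p) (trs da db A)"
  by (simp add: trs_def)

lemma trs_single[simp]: "trs da db {(a,b)} = {(a + da, b + db)}"
  by (simp add: trs_def)

lemma finite_trs[simp]: "finite (trs da db tau) \<longleftrightarrow> finite tau"
  by (simp add: trs_def finite_image_iff inj_on_def inj_trb[THEN injD])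

lemma card_trs[simp]: "card (trs da db tau) = card tau"
  by (simp add: trs_def card_image inj_on_def inj_trb[THEN injD])

lemma trT_trT[simp]: "trT da db (trT da' db' T) = trT (da + da') (db + db') T"
  by (simp add: trT_def image_image)

lemma trT_00[simp]: "trT 0 0 T = T"
  by (simp add: trT_def)

lemma trT_inv[simp]: "trT (- da) (- db) (trT da db T) = T"
  by simp

lemma inj_trT: "inj (trT da db)"
  by (metis injI trT_inv)

lemma mem_trT: "tau \<in> trT da db T \<longleftrightarrow> trs (- da) (- db) tau \<in> T"
  unfolding trT_def by (metis image_iff trs_inv trs_inv')

lemma trs_mem_trT[simp]: "trs da db tau \<in> trT da db T \<longleftrightarrow> tau \<in> T"
  by (simp add: mem_trT)

lemma finite_trT[simp]: "finite (trT da db T) \<longleftrightarrow> finite T"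
  by (simp add: trT_def finite_image_iff inj_on_def)

lemma trT_Un: "trT da db (A \<union> B) = trT da db A \<union> trT da db B"
  by (simp add: trT_def image_Un)

lemma trs_tile_of: "trs da db (tile_of a0 f k) = tile_of (a0 + da) (\<lambda>i. f i + db) k"
  unfolding trs_def tile_of_def image_image by (simp add: algebra_simps)

lemma brep_shift: "brep (\<lambda>i. f i + db) n n' \<longleftrightarrow> brep f n n'"
  unfolding brep_def by simp

lemma ballot_tile_trs_imp: "ballot_tile tau n n' \<Longrightarrow> ballot_tile (trs da db tau) n n'"
  unfolding ballot_tile_iff
proof (elim exE conjE)
  fix a0 f assume "tau = tile_of a0 f (2 * n + n')" "brep f n n'"
  then show "\<exists>a0 f. trs da db tau = tile_of a0 f (2 * n + n') \<and> brep f n n'"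
    by (intro exI[of _ "a0 + da"] exI[of _ "\<lambda>i. f i + db"]) (simp add: trs_tile_of brep_shift)
qed

lemma ballot_tile_trs[simp]: "ballot_tile (trs da db tau) n n' \<longleftrightarrow> ballot_tile tau n n'"
  by (metis ballot_tile_trs_imp trs_inv)

lemma tile_len_trs[simp]: "tile_len (trs da db tau) = tile_len tau"
  by (simp add: tile_len_def)

lemma shift_down_trs: "shift_down tau = trs 0 (-2) tau"
  unfolding shift_down_def trs_def trb_def by (simp add: case_prod_beta')

section \<open>Abstract cover-inclusive tilings\<close>

definition CI :: "box set \<Rightarrow> (int \<Rightarrow> int) \<Rightarrow> int \<Rightarrow> box set set \<Rightarrow> bool" where
  "CI R h L T \<longleftrightarrow> partition_on R T \<and> (\<forall>tau\<in>T. \<exists>n n'. ballot_tile tau n n') \<and>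
     (\<forall>tau\<in>T. snd (tile_len tau) \<ge> 1 \<longrightarrow> (\<forall>c\<in>tau. (\<forall>c'\<in>tau. fst c' \<le> fst c) \<longrightarrow> fst c = L)) \<and>
     (\<forall>tau\<in>T. (\<forall>p\<in>tau. snd p - 1 \<le> h (fst p)) \<or> (\<exists>tau'\<in>T. shift_down tau \<subseteq> tau'))"

lemma CI_cover: "cover_inclusive_tiling lam mu T \<longleftrightarrow>
   CI (skew lam mu) (\<lambda>a. height lam (nat a)) (int (length lam)) T"
proof -
  have "(\<forall>(a,b)\<in>shift_down tau. b + 1 \<le> height lam (nat a)) \<longleftrightarrow>
        (\<forall>p\<in>tau. snd p - 1 \<le> height lam (nat (fst p)))" for tau
    unfolding shift_down_def by auto
  then show ?thesis unfolding cover_inclusive_tiling_def CI_def by simp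
qed

lemma partition_on_trT: "partition_on R T \<Longrightarrow> partition_on (trs da db R) (trT da db T)"
proof -
  assume P: "partition_on R T"
  have "\<Union>(trT da db T) = trs da db (\<Union>T)" by (auto simp: trT_def trs_def)
  moreover have "disjoint (trT da db T)"
    unfolding trT_def trs_def
    by (rule disjoint_image) (use P inj_trb in \<open>auto simp: partition_on_def intro: inj_on_subset\<close>)
  moreover have "{} \<notin> trT da db T" using P by (auto simp: partition_on_def mem_trT)
  ultimately show ?thesis using P by (simp add: partition_on_def)
qed

lemma CI_tr_imp:
  assumes "CI R h L T"
  shows "CI (trs da db R) (\<lambda>a. h (a - da) + db) (L + da) (trT da db T)"
  unfolding CI_def
proof (intro conjI ballI impI)
  show "partition_on (trs da db R) (trT da db T)" using assms partition_on_trT by (simp add: CI_def)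
next
  fix tau assume "tau \<in> trT da db T"
  then obtain t where t: "t \<in> T" "tau = trs da db t" by (auto simp: trT_def)
  show "\<exists>n n'. ballot_tile tau n n'" using t assms by (simp add: CI_def)
next
  fix tau c assume "tau \<in> trT da db T" "1 \<le> snd (tile_len tau)" "c \<in> tau" "\<forall>c'\<in>tau. fst c' \<le> fst c"
  then obtain t where t: "t \<in> T" "tau = trs da db t" by (auto simp: trT_def)
  obtain c0 where c0: "c0 \<in> t" "c = trb da db c0" using \<open>c \<in> tau\<close> t by (auto simp: trs_def)
  have "\<forall>c'\<in>t. fst c' \<le> fst c0"
  proof
    fix c' assume "c' \<in> t"
    then have "trb da db c' \<in> tau" using t by (simp add: trs_def)
    then show "fst c' \<le> fst c0" using \<open>\<forall>c'\<in>tau. fst c' \<le> fst c\<close> c0 by (auto simp: trb_def)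
  qed
  then have "fst c0 = L" using assms t c0 \<open>1 \<le> snd (tile_len tau)\<close> unfolding CI_def by auto
  then show "fst c = L + da" using c0 by (simp add: trb_def)
next
  fix tau assume "tau \<in> trT da db T"
  then obtain t where t: "t \<in> T" "tau = trs da db t" by (auto simp: trT_def)
  from assms t(1) have "(\<forall>p\<in>t. snd p - 1 \<le> h (fst p)) \<or> (\<exists>tau'\<in>T. shift_down t \<subseteq> tau')"
    by (simp add: CI_def)
  then show "(\<forall>p\<in>tau. snd p - 1 \<le> h (fst p - da) + db) \<or> (\<exists>tau'\<in>trT da db T. shift_down tau \<subseteq> tau')"
  proof
    assume "\<forall>p\<in>t. snd p - 1 \<le> h (fst p)"
    then have "\<forall>p\<in>tau. snd p - 1 \<le> h (fst p - da) + db"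
      using t(2) by (auto simp: trs_def trb_def)
    then show ?thesis ..
  next
    assume "\<exists>tau'\<in>T. shift_down t \<subseteq> tau'"
    then obtain t' where "t' \<in> T" "shift_down t \<subseteq> t'" by blast
    moreover have "shift_down tau = trs da db (shift_down t)"
      using t(2) by (simp add: shift_down_trs add.commute)
    ultimately have "trs da db t' \<in> trT da db T" "shift_down tau \<subseteq> trs da db t'"
      by simp_all
    then show ?thesis by blast
  qed
qed

lemma CI_tr: "CI (trs da db R) (\<lambda>a. h (a - da) + db) (L + da) (trT da db T) \<longleftrightarrow> CI R h L T"
proof
  assume "CI (trs da db R) (\<lambda>a. h (a - da) + db) (L + da) (trT da db T)"
  from CI_tr_imp[OF this, of "-da" "-db"] show "CI R h L T" by simp
qed (rule CI_tr_imp)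

lemma CI_subset: "CI R h L T \<Longrightarrow> tau \<in> T \<Longrightarrow> tau \<subseteq> R"
  unfolding CI_def partition_on_def by blast

lemma CI_cong:
  assumes "\<And>p. p \<in> R \<Longrightarrow> h (fst p) = h' (fst p)"
  shows "CI R h L T \<longleftrightarrow> CI R h' L T"
proof -
  have "partition_on R T \<Longrightarrow> tau \<in> T \<Longrightarrow> (\<forall>p\<in>tau. snd p - 1 \<le> h (fst p)) = (\<forall>p\<in>tau. snd p - 1 \<le> h' (fst p))" for tau
  proof -
    assume "partition_on R T" "tau \<in> T"
    then have "\<And>p. p \<in> tau \<Longrightarrow> h (fst p) = h' (fst p)" using assms unfolding partition_on_def by blast
    then show ?thesis by auto
  qed
  then show ?thesis unfolding CI_def by (intro iffI; elim conjE; intro conjI) auto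
qed

section \<open>Regions and items\<close>

definition region :: "path \<Rightarrow> path \<Rightarrow> box set" where
  "region lam mu = {(a,b). odd (a + b) \<and> 1 \<le> a \<and> a \<le> int (length lam) \<and>
      height lam (nat a) < b \<and> b < height mu (nat a)}"

lemma skew_eq:
  assumes "length mu = length lam"
  shows "skew lam mu = region lam mu"
proof (intro set_eqI iffI)
  fix p assume "p \<in> skew lam mu"
  then obtain a b where p: "p = (a, b)" "odd (a + b)" "1 \<le> a" "a \<le> int (length lam)"
      "b - 1 \<ge> height lam (nat a)" "b + 1 \<le> a" "\<not> b - 1 \<ge> height mu (nat a)"
    using assms unfolding skew_def Sreg_def by auto
  have "even (height mu (nat a) + int (nat a))"
    by (rule height_parity) (use p assms in auto)
  then have "even (height mu (nat a) + a)" using p(3) by simp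
  then have "b < height mu (nat a)" using p(2) p(7) by presburger
  then show "p \<in> region lam mu" using p unfolding region_def by auto
next
  fix p assume "p \<in> region lam mu"
  then obtain a b where p: "p = (a, b)" "odd (a + b)" "1 \<le> a" "a \<le> int (length lam)"
      "height lam (nat a) < b" "b < height mu (nat a)"
    unfolding region_def by auto
  have "height mu (nat a) \<le> a" using height_le[of mu "nat a"] p(3) by simp
  then have "b + 1 \<le> a" using p(2) p(6) by presburger
  then show "p \<in> skew lam mu" using p assms unfolding skew_def Sreg_def by auto
qed

definition Items :: "path \<Rightarrow> (path \<times> box set set) set" where
  "Items lam = {(mu, T). weakly_above mu lam \<and> cover_inclusive_tiling lam mu T \<and> typeBI T}"

lemma PMN_Items: "PMN M N = (\<Sum>(mu, T) \<in> Items (lamMN M N). monom 1 (art T))"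
  unfolding PMN_def Items_def by simp

lemma region_bound: "region lam mu \<subseteq> {-int (length lam)..int (length lam)} \<times> {-int (length lam)..int (length lam)}"
proof
  fix p assume "p \<in> region lam mu"
  then obtain a b where p: "p = (a, b)" "1 \<le> a" "a \<le> int (length lam)"
      "height lam (nat a) < b" "b < height mu (nat a)"
    unfolding region_def by auto
  have "- int (nat a) \<le> height lam (nat a)" by (rule height_ge)
  moreover have "height mu (nat a) \<le> int (nat a)" by (rule height_le)
  ultimately show "p \<in> {-int (length lam)..int (length lam)} \<times> {-int (length lam)..int (length lam)}"
    using p by auto
qed

lemma finite_Items: "finite (Items lam)"
proof -
  let ?B = "{-int (length lam)..int (length lam)} \<times> {-int (length lam)..int (length lam)}"
  have "Items lam \<subseteq> {mu. length mu = length lam} \<times> Pow (Pow ?B)"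
  proof
    fix x assume "x \<in> Items lam"
    then obtain mu T where x: "x = (mu, T)" "weakly_above mu lam" "cover_inclusive_tiling lam mu T"
      unfolding Items_def by auto
    have l: "length mu = length lam" using x(2) by (simp add: weakly_above_def)
    have "partition_on (skew lam mu) T" using x(3) by (simp add: cover_inclusive_tiling_def)
    then have "\<Union>T \<subseteq> ?B" using region_bound[of lam mu] skew_eq[OF l] by (simp add: partition_on_def)
    then show "x \<in> {mu. length mu = length lam} \<times> Pow (Pow ?B)" using x l by auto
  qed
  moreover have "finite ({mu :: path. length mu = length lam} \<times> Pow (Pow ?B))"
  proof -
    have "{mu :: bool list. length mu = length lam} = {xs. set xs \<subseteq> UNIV \<and> length xs = length lam}" by simp
    then have f1: "finite {mu :: bool list. length mu = length lam}"
      using finite_lists_length_eq[of "UNIV :: bool set" "length lam"] by simp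
    show ?thesis by (rule finite_cartesian_product[OF f1]) auto
  qed
  ultimately show ?thesis by (rule finite_subset)
qed

lemma Items_iff: "(mu, T) \<in> Items lam \<longleftrightarrow> weakly_above mu lam \<and>
   CI (region lam mu) (\<lambda>a. height lam (nat a)) (int (length lam)) T \<and> typeBI T"
  unfolding Items_def weakly_above_def by (auto simp: CI_cover skew_eq)

section \<open>Translation invariance of weights\<close>

lemma sum_trT: "(\<Sum>tau\<in>trT da db T. f (tile_len tau)) = (\<Sum>tau\<in>T. f (tile_len tau))"
proof -
  have "(\<Sum>tau\<in>trT da db T. f (tile_len tau)) = (\<Sum>tau\<in>T. f (tile_len (trs da db tau)))"
    unfolding trT_def by (rule sum.reindex_cong[where l = "trs da db"]) (auto simp: inj_on_def)
  then show ?thesis by simp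
qed

lemma art_trT[simp]: "art (trT da db T) = art T"
  unfolding art_def tile_area_def tile_tiles_def
  using sum_trT[of "\<lambda>x. 2 * fst x + snd x + 1 + (if snd x = 0 then 1 else 0)" da db T] by simp

lemma card_filter_trT: "card {tau \<in> trT da db T. P (tile_len tau)} = card {tau \<in> T. P (tile_len tau)}"
proof -
  have "{tau \<in> trT da db T. P (tile_len tau)} = trs da db ` {tau \<in> T. P (tile_len tau)}"
    by (auto simp: trT_def)
  then show ?thesis by (simp add: card_image inj_on_def)
qed

lemma typeBI_trT[simp]: "typeBI (trT da db T) \<longleftrightarrow> typeBI T"
proof -
  have "card {tau \<in> trT da db T. tile_len tau = (n, n')} = card {tau \<in> T. tile_len tau = (n, n')}" for n n'
    using card_filter_trT[of da db T "\<lambda>x. x = (n, n')"] by simp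
  moreover have "(\<forall>tau\<in>trT da db T. Q (tile_len tau)) \<longleftrightarrow> (\<forall>tau\<in>T. Q (tile_len tau))" for Q
    by (auto simp: trT_def)
  note C = this
  have B: "(\<forall>tau\<in>trT da db T. \<not> (even (snd (tile_len tau)) \<and> snd (tile_len tau) \<ge> 2)) \<longleftrightarrow>
     (\<forall>tau\<in>T. \<not> (even (snd (tile_len tau)) \<and> snd (tile_len tau) \<ge> 2))"
    by (rule C[of "\<lambda>x. \<not> (even (snd x) \<and> snd x \<ge> 2)"])
  show ?thesis unfolding typeBI_def B using calculation(1) by simp
qed

section \<open>Class 1: paths starting with the same step\<close>

definition sgn_step :: "bool \<Rightarrow> int" where
  "sgn_step s = (if s then 1 else -1)"

lemma region_Cons:
  assumes "length mu1 = length lam1"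
  shows "region (s # lam1) (s # mu1) = trs 1 (sgn_step s) (region lam1 mu1)"
proof (intro set_eqI)
  fix p :: box
  obtain a b where p: "p = (a, b)" by fastforce
  have odd: "odd (sgn_step s)" by (simp add: sgn_step_def)
  show "p \<in> region (s # lam1) (s # mu1) \<longleftrightarrow> p \<in> trs 1 (sgn_step s) (region lam1 mu1)"
  proof (cases "a \<ge> 2")
    case True
    then have "nat (a - 1) = Suc (nat (a - 1 - 1))" by simp
    have h: "height (s # q) (nat a) = sgn_step s + height q (nat (a - 1))" for q
      using height_Cons_nat[of a s q] True by (simp add: sgn_step_def)
    have "odd (a + b) \<longleftrightarrow> odd (a - 1 + (b - sgn_step s))" using odd by presburger
    then show ?thesis using True unfolding p region_def by (auto simp: h)
  next
    case False
    then have "\<not> (1 \<le> a - 1)" by simp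
    have "p \<notin> region (s # lam1) (s # mu1)"
    proof (cases "a = 1")
      case True
      then show ?thesis unfolding p region_def by (simp add: sgn_step_def)
    next
      case False
      then have "\<not> 1 \<le> a" using \<open>\<not> 2 \<le> a\<close> by simp
      then show ?thesis unfolding p region_def by simp
    qed
    moreover have "p \<notin> trs 1 (sgn_step s) (region lam1 mu1)"
      using \<open>\<not> (1 \<le> a - 1)\<close> unfolding p region_def by simp
    ultimately show ?thesis by simp
  qed
qed

lemma weakly_above_Cons: "weakly_above (s # mu1) (s # lam1) \<longleftrightarrow> weakly_above mu1 lam1"
proof
  assume w: "weakly_above (s # mu1) (s # lam1)"
  have "height lam1 x \<le> height mu1 x" if "x \<le> length lam1" for x
    using w that unfolding weakly_above_def by (metis height_Cons_Suc Suc_le_mono add_le_cancel_left length_Cons)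
  then show "weakly_above mu1 lam1" using w by (simp add: weakly_above_def)
next
  assume w: "weakly_above mu1 lam1"
  have "height (s # lam1) x \<le> height (s # mu1) x" if "x \<le> Suc (length lam1)" for x
    using w that unfolding weakly_above_def by (cases x) auto
  then show "weakly_above (s # mu1) (s # lam1)" using w by (simp add: weakly_above_def)
qed

lemma CI_Cons:
  assumes "length mu1 = length lam1"
  shows "CI (region (s # lam1) (s # mu1)) (\<lambda>a. height (s # lam1) (nat a)) (int (length (s # lam1))) (trT 1 (sgn_step s) T)
     \<longleftrightarrow> CI (region lam1 mu1) (\<lambda>a. height lam1 (nat a)) (int (length lam1)) T"
proof -
  have "CI (region (s # lam1) (s # mu1)) (\<lambda>a. height (s # lam1) (nat a)) (int (length (s # lam1))) (trT 1 (sgn_step s) T)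
     \<longleftrightarrow> CI (trs 1 (sgn_step s) (region lam1 mu1)) (\<lambda>a. height lam1 (nat (a - 1)) + sgn_step s) (int (length lam1) + 1) (trT 1 (sgn_step s) T)"
  proof -
    have "height (s # lam1) (nat (fst p)) = height lam1 (nat (fst p - 1)) + sgn_step s"
      if "p \<in> region (s # lam1) (s # mu1)" for p
    proof -
      have "fst p \<ge> 1" using that unfolding region_def by auto
      then show ?thesis using height_Cons_nat[of "fst p" s lam1] by (simp add: sgn_step_def)
    qed
    then have "CI (region (s # lam1) (s # mu1)) (\<lambda>a. height (s # lam1) (nat a)) (int (length (s # lam1))) (trT 1 (sgn_step s) T)
     \<longleftrightarrow> CI (region (s # lam1) (s # mu1)) (\<lambda>a. height lam1 (nat (a - 1)) + sgn_step s) (int (length (s # lam1))) (trT 1 (sgn_step s) T)"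
      by (intro CI_cong) blast
    moreover have "int (length (s # lam1)) = int (length lam1) + 1" by simp
    ultimately show ?thesis unfolding region_Cons[OF assms] by (simp add: add.commute)
  qed
  also have "\<dots> \<longleftrightarrow> CI (region lam1 mu1) (\<lambda>a. height lam1 (nat a)) (int (length lam1)) T"
    using CI_tr[of 1 "sgn_step s" "region lam1 mu1" "\<lambda>a. height lam1 (nat a)"] by simp
  finally show ?thesis .
qed

lemma Items_Cons:
  "(s # mu1, trT 1 (sgn_step s) T) \<in> Items (s # lam1) \<longleftrightarrow> (mu1, T) \<in> Items lam1"
proof -
  have "length mu1 = length lam1" if "weakly_above mu1 lam1" using that by (simp add: weakly_above_def)
  then show ?thesis unfolding Items_iff weakly_above_Cons using CI_Cons by auto
qed

lemma class1_sum:
  "(\<Sum>(mu, T) \<in> {(mu, T) \<in> Items (s # lam1). hd mu = s}. monom (1::int) (art T))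
   = (\<Sum>(mu, T) \<in> Items lam1. monom 1 (art T))"
proof -
  let ?g = "\<lambda>(mu1, T). (s # mu1, trT 1 (sgn_step s) T)"
  have inj: "inj_on ?g (Items lam1)" by (auto simp: inj_on_def dest: inj_trT[THEN injD])
  have img: "{(mu, T) \<in> Items (s # lam1). hd mu = s} = ?g ` Items lam1"
  proof (intro set_eqI iffI)
    fix x assume "x \<in> {(mu, T) \<in> Items (s # lam1). hd mu = s}"
    then obtain mu T where x: "x = (mu, T)" "(mu, T) \<in> Items (s # lam1)" "hd mu = s" by auto
    then have "length mu = Suc (length lam1)" by (simp add: Items_def weakly_above_def)
    then obtain mu1 where mu: "mu = s # mu1" using x(3) by (cases mu) auto
    have "(s # mu1, trT 1 (sgn_step s) (trT (-1) (- sgn_step s) T)) \<in> Items (s # lam1)"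
      using x mu by simp
    then have "(mu1, trT (-1) (- sgn_step s) T) \<in> Items lam1" by (simp only: Items_Cons)
    moreover have "x = ?g (mu1, trT (-1) (- sgn_step s) T)" using x mu by simp
    ultimately show "x \<in> ?g ` Items lam1" by blast
  next
    fix x assume "x \<in> ?g ` Items lam1"
    then obtain mu1 T where "x = ?g (mu1, T)" "(mu1, T) \<in> Items lam1" by auto
    then show "x \<in> {(mu, T) \<in> Items (s # lam1). hd mu = s}" using Items_Cons by auto
  qed
  show ?thesis unfolding img using inj by (simp add: sum.reindex) (simp add: case_prod_beta)
qed

lemma partition_on_Un:
  assumes "partition_on A P" "partition_on B Q" "A \<inter> B = {}"
  shows "partition_on (A \<union> B) (P \<union> Q)"
proof (rule partition_onI)
  show "\<Union>(P \<union> Q) = A \<union> B" using assms by (auto simp: partition_on_def)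
  show "{} \<notin> P \<union> Q" using assms by (auto simp: partition_on_def)
  fix p q assume pq: "p \<in> P \<union> Q" "q \<in> P \<union> Q" "p \<noteq> q"
  have sA: "p \<subseteq> A" if "p \<in> P" for p using assms(1) that by (auto simp: partition_on_def)
  have sB: "p \<subseteq> B" if "p \<in> Q" for p using assms(2) that by (auto simp: partition_on_def)
  show "disjnt p q"
  proof (cases "p \<in> P")
    case True
    show ?thesis
    proof (cases "q \<in> P")
      case True
      then show ?thesis using \<open>p \<in> P\<close> pq(3) assms(1) by (auto simp: partition_on_def pairwise_def)
    next
      case False
      then have "q \<in> Q" using pq by auto
      then show ?thesis using sA[OF \<open>p \<in> P\<close>] sB assms(3) by (auto simp: disjnt_def)
    qed
  next
    case False
    then have "p \<in> Q" using pq by auto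
    show ?thesis
    proof (cases "q \<in> P")
      case True
      then show ?thesis using sA sB[OF \<open>p \<in> Q\<close>] assms(3) by (auto simp: disjnt_def)
    next
      case False
      then have "q \<in> Q" using pq by auto
      then show ?thesis using \<open>p \<in> Q\<close> pq(3) assms(2) by (auto simp: partition_on_def pairwise_def)
    qed
  qed
qed

lemma partition_on_Diff:
  assumes "partition_on A P" "Q \<subseteq> P"
  shows "partition_on (A - \<Union>Q) (P - Q)"
proof (rule partition_onI)
  have d: "p \<inter> q = {}" if "p \<in> P" "q \<in> P" "p \<noteq> q" for p q
    using assms(1) that unfolding partition_on_def pairwise_def disjnt_def by blast
  show "\<Union>(P - Q) = A - \<Union>Q"
  proof
    show "\<Union>(P - Q) \<subseteq> A - \<Union>Q"
    proof
      fix x assume "x \<in> \<Union>(P - Q)"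
      then obtain p where p: "p \<in> P" "p \<notin> Q" "x \<in> p" by auto
      have "x \<in> A" using p assms(1) by (auto simp: partition_on_def)
      moreover have "x \<notin> \<Union>Q"
      proof
        assume "x \<in> \<Union>Q"
        then obtain q where "q \<in> Q" "x \<in> q" by auto
        then show False using d[of p q] p assms(2) by auto
      qed
      ultimately show "x \<in> A - \<Union>Q" by simp
    qed
    show "A - \<Union>Q \<subseteq> \<Union>(P - Q)" using assms(1) by (auto simp: partition_on_def)
  qed
  show "{} \<notin> P - Q" using assms by (auto simp: partition_on_def)
  fix p q assume "p \<in> P - Q" "q \<in> P - Q" "p \<noteq> q"
  then show "disjnt p q" using d by (auto simp: disjnt_def)
qed

lemma partition_same:
  assumes "partition_on A P" "t1 \<in> P" "t2 \<in> P" "x \<in> t1" "x \<in> t2"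
  shows "t1 = t2"
  using assms unfolding partition_on_def pairwise_def disjnt_def by blast

lemma tile_of_single: "{(a, b)} = tile_of a (\<lambda>_. b) 0"
  by (simp add: tile_of_def)

lemma ballot_single: "ballot_tile {p} 0 0"
proof -
  obtain a b where "p = (a, b)" by fastforce
  then show ?thesis unfolding ballot_tile_iff tile_of_single
    by (intro exI[of _ a] exI[of _ "\<lambda>_. b"]) (auto simp: brep_def tile_of_single)
qed

lemma tile_len_single[simp]: "tile_len {p} = (0, 0)"
  by (rule tile_len_eq[OF ballot_single])

lemma tile_of_cong: "(\<And>i. i \<le> k \<Longrightarrow> f i = g i) \<Longrightarrow> tile_of a0 f k = tile_of a0 g k"
  unfolding tile_of_def by (rule image_cong) auto

lemma CI_tile:
  assumes "CI R h L T" "tau \<in> T"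
  shows "\<exists>a0 f. tau = tile_of a0 f (2 * fst (tile_len tau) + snd (tile_len tau)) \<and>
           brep f (fst (tile_len tau)) (snd (tile_len tau))"
proof -
  obtain n n' where "ballot_tile tau n n'" using assms by (auto simp: CI_def)
  then have "tile_len tau = (n, n')" "ballot_tile tau n n'" by (auto simp: tile_len_eq)
  then show ?thesis unfolding ballot_tile_iff by simp
qed

lemma brep_ge: "brep f n n' \<Longrightarrow> i \<le> 2*n+n' \<Longrightarrow> f 0 \<le> f i"
  unfolding brep_def by blast

lemma brep_step: "brep f n n' \<Longrightarrow> i < 2*n+n' \<Longrightarrow> \<bar>f (Suc i) - f i\<bar> = 1"
  unfolding brep_def by blast

lemma brep_2n: "brep f n n' \<Longrightarrow> f (2*n) = f 0"
  unfolding brep_def by blast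

lemma brep_tail: "brep f n n' \<Longrightarrow> 2*n < i \<Longrightarrow> i \<le> 2*n+n' \<Longrightarrow> f 0 < f i"
  unfolding brep_def by blast

lemma bottom_single:
  assumes tau: "tau = tile_of a0 f k" and b: "brep f n n'" and k: "k = 2*n+n'"
    and on: "\<And>i. i \<le> k \<Longrightarrow> f i = H (a0 + int i) + 1"
    and a: "a0 \<le> a" "a \<le> a0 + int k"
    and desc_left: "\<And>x. a0 \<le> x \<Longrightarrow> x < a \<Longrightarrow> H a < H x"
    and desc_right: "a < a0 + int k \<Longrightarrow> H (a + 1) < H a"
  shows "a0 = a \<and> k = 0"
proof -
  have "a0 = a"
  proof (rule ccontr)
    assume "a0 \<noteq> a"
    then have "a0 < a" using a by simp
    have "f 0 \<le> f (nat (a - a0))" using brep_ge[OF b, of "nat (a - a0)"] a k by simp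
    moreover have "f 0 = H a0 + 1" using on[of 0] by simp
    moreover have "f (nat (a - a0)) = H a + 1" using on[of "nat (a - a0)"] a by simp
    ultimately show False using desc_left[of a0] \<open>a0 < a\<close> by simp
  qed
  moreover have "k = 0"
  proof (rule ccontr)
    assume "k \<noteq> 0"
    then have "f 0 \<le> f 1" using brep_ge[OF b, of 1] k by linarith
    moreover have "f 0 = H a + 1" using on[of 0] \<open>a0 = a\<close> by simp
    moreover have "f 1 = H (a + 1) + 1" using on[of 1] \<open>a0 = a\<close> \<open>k \<noteq> 0\<close> by simp
    ultimately show False using desc_right \<open>a0 = a\<close> \<open>k \<noteq> 0\<close> by simp
  qed
  ultimately show ?thesis by simp
qed

lemma brep_increasing:
  assumes b: "brep f n n'" and inc: "\<And>i. i \<le> 2*n+n' \<Longrightarrow> f i = f 0 + int i"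
  shows "n = 0"
  using brep_2n[OF b] inc[of "2*n"] by simp

lemma typeBI_Un:
  assumes fin: "finite E" "finite T" and dis: "E \<inter> T = {}"
    and E1: "\<forall>tau\<in>E. \<not> (even (snd (tile_len tau)) \<and> snd (tile_len tau) \<ge> 2)"
    and E2: "\<forall>n n'. odd n' \<longrightarrow> even (card {tau\<in>E. tile_len tau = (n, n')})"
  shows "typeBI (E \<union> T) \<longleftrightarrow> typeBI T"
proof -
  have c: "card {tau\<in>E \<union> T. tile_len tau = (n, n')} = card {tau\<in>E. tile_len tau = (n, n')} + card {tau\<in>T. tile_len tau = (n, n')}" for n n'
  proof -
    have "{tau\<in>E \<union> T. tile_len tau = (n, n')} = {tau\<in>E. tile_len tau = (n, n')} \<union> {tau\<in>T. tile_len tau = (n, n')}" by auto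
    then show ?thesis using fin dis by (simp add: card_Un_disjoint disjoint_iff)
  qed
  show ?thesis
  proof
    assume t: "typeBI (E \<union> T)"
    show "typeBI T" unfolding typeBI_def
    proof (intro conjI allI impI ballI)
      fix tau assume "tau \<in> T" then show "\<not> (even (snd (tile_len tau)) \<and> 2 \<le> snd (tile_len tau))"
        using t by (auto simp: typeBI_def)
    next
      fix n n' :: nat assume "odd n'"
      then have "even (card {tau\<in>E \<union> T. tile_len tau = (n, n')})" "even (card {tau\<in>E. tile_len tau = (n, n')})"
        using t E2 by (auto simp: typeBI_def)
      then show "even (card {tau\<in>T. tile_len tau = (n, n')})" unfolding c by simp
    qed
  next
    assume t: "typeBI T"
    show "typeBI (E \<union> T)" unfolding typeBI_def
    proof (intro conjI allI impI ballI)
      fix tau assume "tau \<in> E \<union> T" then show "\<not> (even (snd (tile_len tau)) \<and> 2 \<le> snd (tile_len tau))"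
        using t E1 by (auto simp: typeBI_def)
    next
      fix n n' :: nat assume "odd n'"
      then have "even (card {tau\<in>T. tile_len tau = (n, n')})" "even (card {tau\<in>E. tile_len tau = (n, n')})"
        using t E2 by (auto simp: typeBI_def)
      then show "even (card {tau\<in>E \<union> T. tile_len tau = (n, n')})" unfolding c by simp
    qed
  qed
qed

definition wt :: "box set \<Rightarrow> nat" where
  "wt tau = tile_area tau + tile_tiles tau"

lemma art_wt: "art T = (\<Sum>tau\<in>T. wt tau) div 2"
  by (simp add: art_def wt_def)

lemma art_Un:
  assumes "finite E" "finite T" "E \<inter> T = {}" "(\<Sum>tau\<in>E. wt tau) = 2 * k"
  shows "art (E \<union> T) = k + art T"
  using assms by (simp add: art_wt sum.union_disjoint)

lemma wt_single[simp]: "wt {p} = 2"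
  by (simp add: wt_def tile_area_def tile_tiles_def)

definition HL :: "nat \<Rightarrow> int \<Rightarrow> int" where
  "HL N a = (if a \<le> int N then - a else a - 2 * int N)"

lemma height_lam_HL: "0 \<le> a \<Longrightarrow> a \<le> int (M + N) \<Longrightarrow> height (lamMN M N) (nat a) = HL N a"
proof -
  assume a: "0 \<le> a" "a \<le> int (M + N)"
  then have "nat a \<le> M + N" by simp
  moreover have "(nat a \<le> N) = (a \<le> int N)" using a by linarith
  ultimately show ?thesis using height_lam[of "nat a" M N] a by (simp add: HL_def)
qed

lemma mem_region_lam:
  assumes "length mu = M + N"
  shows "(a, b) \<in> region (lamMN M N) mu \<longleftrightarrow> odd (a + b) \<and> 1 \<le> a \<and> a \<le> int (M + N) \<and>
      HL N a < b \<and> b < height mu (nat a)"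
  unfolding region_def using height_lam_HL[of a M N] by auto

lemma mem_region_lam_True:
  assumes "length mu1 + 1 = M + N"
  shows "(a, b) \<in> region (lamMN M N) (True # mu1) \<longleftrightarrow> odd (a + b) \<and> 1 \<le> a \<and> a \<le> int (M + N) \<and>
      HL N a < b \<and> b < 1 + height mu1 (nat (a - 1))"
proof -
  have "1 \<le> a \<Longrightarrow> height (True # mu1) (nat a) = 1 + height mu1 (nat (a - 1))"
    using height_Cons_nat[of a True mu1] by simp
  then show ?thesis using mem_region_lam[of "True # mu1" M N a b] assms by auto
qed

definition strip :: "nat \<Rightarrow> box set set" where
  "strip K = (\<lambda>a. {(a, 1 - a)}) ` {1..int K}"

lemma finite_strip[simp]: "finite (strip K)"
  by (simp add: strip_def)

lemma Union_strip: "\<Union>(strip K) = {(a, b). 1 \<le> a \<and> a \<le> int K \<and> b = 1 - a}"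
  by (auto simp: strip_def)

lemma sum_wt_strip: "(\<Sum>tau\<in>strip K. wt tau) = 2 * K"
proof -
  have "(\<Sum>tau\<in>strip K. wt tau) = (\<Sum>a\<in>{1..int K}. wt {(a, 1 - a)})"
    unfolding strip_def by (rule sum.reindex_cong[where l = "\<lambda>a. {(a, 1 - a)}"]) (auto simp: inj_on_def)
  then show ?thesis by simp
qed

lemma tile_len_strip: "tau \<in> strip K \<Longrightarrow> tile_len tau = (0, 0)"
  by (auto simp: strip_def)

lemma partition_strip: "partition_on (\<Union>(strip K)) (strip K)"
  by (rule partition_onI) (auto simp: strip_def disjnt_def)

definition Atile :: "nat \<Rightarrow> nat \<Rightarrow> int \<Rightarrow> box set" where
  "Atile M N c = tile_of (int N) (\<lambda>i. c - int N + int i) M"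

lemma brep_line: "brep (\<lambda>i. c + int i) 0 M"
  unfolding brep_def by auto

lemma ballot_Atile: "ballot_tile (Atile M N c) 0 M"
  unfolding ballot_tile_iff Atile_def
  by (intro exI[of _ "int N"] exI[of _ "\<lambda>i. c - int N + int i"]) (simp add: brep_line[of "c - int N" M])

lemma tile_len_Atile[simp]: "tile_len (Atile M N c) = (0, M)"
  by (rule tile_len_eq[OF ballot_Atile])

lemma mem_Atile: "(a, b) \<in> Atile M N c \<longleftrightarrow> int N \<le> a \<and> a \<le> int N + int M \<and> b = c + a - 2 * int N"
  unfolding Atile_def mem_tile_of by auto

lemma trs_Atile: "trs 0 d (Atile M N c) = Atile M N (c + d)"
  unfolding Atile_def trs_tile_of by (simp add: algebra_simps)

lemma card_Atile: "card (Atile M N c) = Suc M"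
  by (simp add: Atile_def card_tile_of)

lemma finite_Atile[simp]: "finite (Atile M N c)"
  by (simp add: Atile_def)

lemma wt_Atile: "M \<ge> 1 \<Longrightarrow> wt (Atile M N c) = M + 1"
  by (simp add: wt_def tile_area_def tile_tiles_def)

section \<open>Structure of tilings when the upper path starts with an up step\<close>

lemma down_mem: "shift_down tau \<subseteq> tau' \<Longrightarrow> (a, b) \<in> tau \<Longrightarrow> (a, b - 2) \<in> tau'"
  unfolding shift_down_trs by (auto simp: subset_iff mem_trs)

lemma shift_down_single:
  assumes "shift_down tau \<subseteq> {(a, c)}" "tau \<noteq> {}"
  shows "tau = {(a, c + 2)}"
proof -
  have "p = (a, c + 2)" if "p \<in> tau" for p
  proof -
    obtain x y where p: "p = (x, y)" by fastforce
    have "(x, y - 2) \<in> shift_down tau" using that p unfolding shift_down_trs by simp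
    then show ?thesis using assms(1) p by auto
  qed
  then show ?thesis using assms(2) by auto
qed

locale ustart =
  fixes M N :: nat and mu1 :: path and T :: "box set set"
  assumes N1: "1 \<le> N" and M1: "1 \<le> M"
    and it: "(True # mu1, T) \<in> Items (lamMN M N)"
begin

abbreviation "R \<equiv> region (lamMN M N) (True # mu1)"
abbreviation "h \<equiv> \<lambda>a. height (lamMN M N) (nat a)"

lemma len: "length mu1 + 1 = M + N"
  using it by (simp add: Items_def weakly_above_def)

lemma CIT: "CI R h (int (M + N)) T"
  using it by (simp add: Items_iff)

lemma BIT: "typeBI T"
  using it by (simp add: Items_iff)

lemma partT: "partition_on R T"
  using CIT by (simp add: CI_def)

lemma finT: "finite T"
proof -
  have "finite R" using region_bound[of "lamMN M N" "True # mu1"] by (rule finite_subset) simp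
  then show ?thesis using partT finite_elements by blast
qed

lemma inR: "(a, b) \<in> R \<longleftrightarrow> odd (a + b) \<and> 1 \<le> a \<and> a \<le> int (M + N) \<and>
      HL N a < b \<and> b < 1 + height mu1 (nat (a - 1))"
  using mem_region_lam_True[OF len] .

lemma tileR: "tau \<in> T \<Longrightarrow> tau \<subseteq> R"
  using CI_subset[OF CIT] .

lemma tile_ne: "tau \<in> T \<Longrightarrow> tau \<noteq> {}"
  using partT by (auto simp: partition_on_def)

lemma support: "tau \<in> T \<Longrightarrow> (\<forall>p\<in>tau. snd p - 1 \<le> h (fst p)) \<or> (\<exists>tau'\<in>T. shift_down tau \<subseteq> tau')"
  using CIT by (simp add: CI_def)

lemma bottom_eq:
  assumes "tau \<in> T" "\<forall>p\<in>tau. snd p - 1 \<le> h (fst p)" "(a, b) \<in> tau"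
  shows "b = HL N a + 1"
proof -
  have r: "(a, b) \<in> R" using assms tileR by blast
  then have "h a = HL N a" using height_lam_HL[of a M N] by (simp add: inR)
  then show ?thesis using assms(2,3) r inR by force
qed

lemma strip_R: "1 \<le> a \<Longrightarrow> a \<le> int N \<Longrightarrow> (a, 1 - a) \<in> R"
proof -
  assume a: "1 \<le> a" "a \<le> int N"
  have "- int (nat (a - 1)) \<le> height mu1 (nat (a - 1))" by (rule height_ge)
  then show ?thesis unfolding inR using a by (simp add: HL_def)
qed

lemma tile_of_T:
  assumes "tau \<in> T"
  obtains a0 f n n' where "tau = tile_of a0 f (2*n+n')" "brep f n n'" "tile_len tau = (n, n')"
  using CI_tile[OF CIT assms] by (metis prod.collapse)

lemma left_single_aux:
  "\<forall>tau a b. tau \<in> T \<longrightarrow> (a, b) \<in> tau \<longrightarrow> a < int N \<longrightarrow> nat (a + b) = k \<longrightarrow> tau = {(a, b)}"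
proof (induction k rule: less_induct)
  case (less k)
  show ?case
  proof (intro allI impI)
    fix tau a b assume t: "tau \<in> T" "(a, b) \<in> tau" "a < int N" "nat (a + b) = k"
    have ab: "(a, b) \<in> R" using t tileR by blast
    from support[OF t(1)] show "tau = {(a, b)}"
    proof
      assume bot: "\<forall>p\<in>tau. snd p - 1 \<le> h (fst p)"
      obtain a0 f n n' where tf: "tau = tile_of a0 f (2*n+n')" "brep f n n'"
        using tile_of_T[OF t(1)] by metis
      have on: "f i = HL N (a0 + int i) + 1" if "i \<le> 2*n+n'" for i
      proof -
        have "(a0 + int i, f i) \<in> tau" unfolding tf mem_tile_of using that by simp
        then show ?thesis using bottom_eq[OF t(1) bot] by blast
      qed
      have a_in: "a0 \<le> a" "a \<le> a0 + int (2*n+n')" using t(2) unfolding tf mem_tile_of by auto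
      have "a0 = a \<and> 2*n+n' = 0"
      proof (rule bottom_single[OF tf(1) tf(2) refl on a_in])
        fix x assume "a0 \<le> x" "x < a"
        then show "HL N a < HL N x" using t(3) by (simp add: HL_def)
      next
        show "HL N (a + 1) < HL N a" using t(3) by (simp add: HL_def)
      qed simp
      then have "tau = {(a, f 0)}" using tf(1) by (simp add: tile_of_def)
      then show ?thesis using t(2) by simp
    next
      assume "\<exists>tau'\<in>T. shift_down tau \<subseteq> tau'"
      then obtain tau' where tau': "tau' \<in> T" "shift_down tau \<subseteq> tau'" by blast
      have m: "(a, b - 2) \<in> tau'" using down_mem[OF tau'(2) t(2)] .
      then have "(a, b - 2) \<in> R" using tau' tileR by blast
      then have "HL N a < b - 2" by (simp add: inR)
      then have "nat (a + (b - 2)) < k" using t(3,4) by (simp add: HL_def)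
      then have "tau' = {(a, b - 2)}" using less.IH t(3) tau'(1) m by blast
      then show ?thesis using shift_down_single[of tau a "b - 2"] tau'(2) tile_ne[OF t(1)] by simp
    qed
  qed
qed

lemma left_single: "tau \<in> T \<Longrightarrow> (a, b) \<in> tau \<Longrightarrow> a < int N \<Longrightarrow> tau = {(a, b)}"
  using left_single_aux by blast

lemma in_some_tile: "p \<in> R \<Longrightarrow> \<exists>tau\<in>T. p \<in> tau"
  using partT by (auto simp: partition_on_def)

lemma strip_T: "strip (N - 1) \<subseteq> T"
proof
  fix t assume "t \<in> strip (N - 1)"
  then obtain a where a: "t = {(a, 1 - a)}" "1 \<le> a" "a \<le> int (N - 1)" by (auto simp: strip_def)
  then have "(a, 1 - a) \<in> R" using strip_R N1 by simp
  then obtain tau where "tau \<in> T" "(a, 1 - a) \<in> tau" using in_some_tile by blast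
  moreover have "a < int N" using a N1 by simp
  ultimately show "t \<in> T" using left_single a(1) by metis
qed

lemma valley_tile:
  assumes t: "tau \<in> T" "(int N, 1 - int N) \<in> tau"
  shows "tau = {(int N, 1 - int N)} \<or> tau = Atile M N 1"
proof -
  have bot: "\<forall>p\<in>tau. snd p - 1 \<le> h (fst p)"
  proof (rule ccontr)
    assume "\<not> ?thesis"
    then obtain tau' where "tau' \<in> T" "shift_down tau \<subseteq> tau'" using support[OF t(1)] by blast
    then have "(int N, 1 - int N - 2) \<in> R" using down_mem[OF _ t(2)] tileR by blast
    then show False by (simp add: inR HL_def)
  qed
  obtain a0 f n n' where tf: "tau = tile_of a0 f (2*n+n')" "brep f n n'" "tile_len tau = (n, n')"
    using tile_of_T[OF t(1)] by metis
  have on: "f i = HL N (a0 + int i) + 1" if "i \<le> 2*n+n'" for i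
  proof -
    have "(a0 + int i, f i) \<in> tau" unfolding tf mem_tile_of using that by simp
    then show ?thesis using bottom_eq[OF t(1) bot] by blast
  qed
  have a_in: "a0 \<le> int N" "int N \<le> a0 + int (2*n+n')" using t(2) unfolding tf mem_tile_of by auto
  have a0: "a0 = int N"
  proof (rule ccontr)
    assume "a0 \<noteq> int N"
    then have "a0 < int N" using a_in by simp
    have "f 0 \<le> f (nat (int N - a0))" using brep_ge[OF tf(2), of "nat (int N - a0)"] a_in by simp
    moreover have "f 0 = HL N a0 + 1" using on[of 0] by simp
    moreover have "f (nat (int N - a0)) = HL N (int N) + 1" using on[of "nat (int N - a0)"] a_in by simp
    ultimately show False using \<open>a0 < int N\<close> by (simp add: HL_def)
  qed
  have fi: "f i = 1 - int N + int i" if "i \<le> 2*n+n'" for i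
    using on[OF that] a0 by (simp add: HL_def)
  have n0: "n = 0" using brep_increasing[OF tf(2)] fi by simp
  show ?thesis
  proof (cases "n' = 0")
    case True
    then have "tau = {(int N, f 0)}" using tf(1) a0 n0 by (simp add: tile_of_def)
    then show ?thesis using fi[of 0] by simp
  next
    case False
    let ?c = "(int N + int n', f n')"
    have c: "?c \<in> tau" unfolding tf mem_tile_of using a0 n0 by simp
    have mx: "\<forall>c'\<in>tau. fst c' \<le> fst ?c" unfolding tf using a0 n0 by (auto simp: mem_tile_of')
    have "fst ?c = int (M + N)" using CIT t(1) c mx False tf(3) unfolding CI_def by auto
    then have "n' = M" by simp
    then have "tau = tile_of (int N) (\<lambda>i. 1 - int N + int i) M"
      using tf(1) a0 n0 fi tile_of_cong[of M f "\<lambda>i. 1 - int N + int i" "int N"] by simp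
    then show ?thesis by (simp add: Atile_def)
  qed
qed

lemma A_odd: "Atile M N 1 \<in> T \<Longrightarrow> odd M"
proof -
  assume A: "Atile M N 1 \<in> T"
  have "\<forall>tau\<in>T. \<not> (even (snd (tile_len tau)) \<and> snd (tile_len tau) \<ge> 2)" using BIT by (simp add: typeBI_def)
  then have "\<not> (even M \<and> M \<ge> 2)" using A by fastforce
  then show "odd M" using M1 by presburger
qed

lemma A_mem: "(int N, 1 - int N) \<in> Atile M N 1"
  by (simp add: mem_Atile)

lemma B_chain:
  assumes A: "Atile M N 1 \<in> T"
  shows "\<forall>g. tile_of (int N) g M \<in> T \<longrightarrow> g 0 = 3 - int N + 2 * int j \<longrightarrow> Atile M N 3 \<in> T"
proof (induction j)
  case 0
  show ?case
  proof (intro allI impI)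
    fix g assume D: "tile_of (int N) g M \<in> T" "g 0 = 3 - int N + 2 * int 0"
    let ?D = "tile_of (int N) g M"
    have m: "(int N, 3 - int N) \<in> ?D" using D(2) by (simp add: mem_tile_of)
    have "\<not> (\<forall>p\<in>?D. snd p - 1 \<le> h (fst p))"
    proof
      assume "\<forall>p\<in>?D. snd p - 1 \<le> h (fst p)"
      from bottom_eq[OF D(1) this m] show False by (simp add: HL_def)
    qed
    then obtain t' where t': "t' \<in> T" "shift_down ?D \<subseteq> t'" using support[OF D(1)] by blast
    have "(int N, 1 - int N) \<in> t'" using down_mem[OF t'(2) m] by simp
    then have "t' = Atile M N 1" using partition_same[OF partT t'(1) A _ A_mem] by simp
    then have "trs 0 2 (shift_down ?D) \<subseteq> trs 0 2 (Atile M N 1)" using t'(2) by simp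
    then have sub: "?D \<subseteq> Atile M N 3" unfolding shift_down_trs trs_Atile by simp
    have "card ?D = card (Atile M N 3)" by (simp add: card_tile_of card_Atile)
    then have "?D = Atile M N 3" using card_subset_eq[OF _ sub] by simp
    then show "Atile M N 3 \<in> T" using D(1) by simp
  qed
next
  case (Suc j)
  show ?case
  proof (intro allI impI)
    fix g assume D: "tile_of (int N) g M \<in> T" "g 0 = 3 - int N + 2 * int (Suc j)"
    let ?D = "tile_of (int N) g M"
    have m: "(int N, g 0) \<in> ?D" by (simp add: mem_tile_of)
    have mM: "(int N + int M, g M) \<in> ?D" by (simp add: mem_tile_of)
    have "\<not> (\<forall>p\<in>?D. snd p - 1 \<le> h (fst p))"
    proof
      assume "\<forall>p\<in>?D. snd p - 1 \<le> h (fst p)"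
      from bottom_eq[OF D(1) this m] D(2) show False by (simp add: HL_def)
    qed
    then obtain t' where t': "t' \<in> T" "shift_down ?D \<subseteq> t'" using support[OF D(1)] by blast
    have m1: "(int N, g 0 - 2) \<in> t'" using down_mem[OF t'(2) m] by simp
    have m2: "(int N + int M, g M - 2) \<in> t'" using down_mem[OF t'(2) mM] by simp
    have noleft: "x \<ge> int N" if "(x, y) \<in> t'" for x y
    proof (rule ccontr)
      assume "\<not> x \<ge> int N"
      then have "t' = {(x, y)}" using left_single[OF t'(1) that] by simp
      then show False using m1 m2 M1 by simp
    qed
    obtain a0 f n n' where tf: "t' = tile_of a0 f (2*n+n')" "brep f n n'"
      using tile_of_T[OF t'(1)] by metis
    have "(a0, f 0) \<in> t'" unfolding tf mem_tile_of by simp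
    then have "a0 \<ge> int N" using noleft by blast
    moreover have "a0 \<le> int N" using m1 unfolding tf mem_tile_of by simp
    ultimately have a0: "a0 = int N" by simp
    have "(a0 + int (2*n+n'), f (2*n+n')) \<in> t'" unfolding tf by (rule tile_of_mem_i) simp
    then have "a0 + int (2*n+n') \<le> int (M + N)" using tileR[OF t'(1)] inR by blast
    moreover have "int N + int M \<le> a0 + int (2*n+n')" using m2 unfolding tf mem_tile_of by simp
    ultimately have k: "2*n+n' = M" using a0 by simp
    have "f 0 = g 0 - 2" using m1 unfolding tf mem_tile_of a0 by simp
    then have "f 0 = 3 - int N + 2 * int j" using D(2) by simp
    moreover have "tile_of (int N) f M \<in> T" using t'(1) tf(1) a0 k by simp
    ultimately show "Atile M N 3 \<in> T" using Suc.IH by blast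
  qed
qed

lemma B_in:
  assumes A: "Atile M N 1 \<in> T"
  shows "Atile M N 3 \<in> T"
proof -
  let ?X = "{tau\<in>T. tile_len tau = (0, M)}"
  have "odd M" using A_odd[OF A] .
  then have ev: "even (card ?X)" using BIT unfolding typeBI_def by blast
  have "A' \<in> ?X" if "A' = Atile M N 1" for A' using A that by simp
  then have AX: "Atile M N 1 \<in> ?X" by blast
  have "?X \<noteq> {Atile M N 1}"
  proof
    assume "?X = {Atile M N 1}"
    then have "card ?X = 1" by simp
    then show False using ev by simp
  qed
  then obtain C where C: "C \<in> T" "tile_len C = (0, M)" "C \<noteq> Atile M N 1" using AX by blast
  obtain a0 g n n' where tf: "C = tile_of a0 g (2*n+n')" "brep g n n'" "tile_len C = (n, n')"
    using tile_of_T[OF C(1)] by metis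
  have nn: "n = 0" "n' = M" using tf(3) C(2) by auto
  let ?c = "(a0 + int M, g M)"
  have c: "?c \<in> C" unfolding tf mem_tile_of nn by simp
  have mx: "\<forall>c'\<in>C. fst c' \<le> fst ?c" unfolding tf nn by (auto simp: mem_tile_of')
  have "fst ?c = int (M + N)" using CIT C(1) c mx M1 C(2) unfolding CI_def by auto
  then have a0: "a0 = int N" by simp
  have m: "(int N, g 0) \<in> C" unfolding tf mem_tile_of a0 by simp
  then have r: "(int N, g 0) \<in> R" using tileR[OF C(1)] by blast
  have "g 0 \<noteq> 1 - int N"
  proof
    assume "g 0 = 1 - int N"
    then have "C = Atile M N 1" using partition_same[OF partT C(1) A m] A_mem by simp
    then show False using C(3) by simp
  qed
  moreover have "odd (int N + g 0)" "HL N (int N) < g 0" using r by (simp_all add: inR)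
  moreover have "HL N (int N) = - int N" by (simp add: HL_def)
  ultimately have g1: "g 0 \<noteq> 1 - int N" "odd (int N + g 0)" "- int N < g 0" by simp_all
  have ge: "g 0 \<ge> 3 - int N" "even (g 0 - 3 + int N)"
    using g1 by presburger+
  have "g 0 = 3 - int N + 2 * int (nat ((g 0 - 3 + int N) div 2))"
    using ge by simp
  then have "\<exists>j. g 0 = 3 - int N + 2 * int j" by blast
  then obtain j where "g 0 = 3 - int N + 2 * int j" by blast
  moreover have "tile_of (int N) g M \<in> T" using C(1) tf(1) a0 nn by simp
  ultimately show ?thesis using B_chain[OF A] by blast
qed

end

section \<open>Class 2\<close>

lemma region2:
  assumes M1: "1 \<le> M" and N1: "1 \<le> N" and len: "length mu1 + 1 = M + N"
  shows "region (lamMN M N) (True # mu1) = \<Union>(strip N) \<union> trs 1 1 (region (lamMN (M - 1) N) mu1)"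
    (is "?L = ?S \<union> ?T")
proof (intro set_eqI)
  fix p :: box
  obtain a b where p: "p = (a, b)" by fastforce
  have l2: "length mu1 = M - 1 + N" using len M1 by simp
  have T: "(a, b) \<in> ?T \<longleftrightarrow> odd (a + b) \<and> 2 \<le> a \<and> a \<le> int (M + N) \<and> HL N (a - 1) + 1 < b \<and> b < 1 + height mu1 (nat (a - 1))"
    using mem_region_lam[OF l2, of "a - 1" "b - 1"] M1 by (auto simp: algebra_simps)
  have L: "(a, b) \<in> ?L \<longleftrightarrow> odd (a + b) \<and> 1 \<le> a \<and> a \<le> int (M + N) \<and> HL N a < b \<and> b < 1 + height mu1 (nat (a - 1))"
    by (rule mem_region_lam_True[OF len])
  have S: "(a, b) \<in> ?S \<longleftrightarrow> 1 \<le> a \<and> a \<le> int N \<and> b = 1 - a"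
    by (simp add: Union_strip)
  have hg: "- int (nat (a - 1)) \<le> height mu1 (nat (a - 1))" by (rule height_ge)
  have h1: "a = 1 \<Longrightarrow> height mu1 (nat (a - 1)) = 0" by simp
  show "p \<in> ?L \<longleftrightarrow> p \<in> ?S \<union> ?T"
  proof (cases "a = 1")
    case True
    then show ?thesis unfolding p Un_iff L S T using N1 by (auto simp: HL_def)
  next
    case False
    have e: "odd (a + b) \<Longrightarrow> - a < b \<Longrightarrow> b \<noteq> 1 - a \<Longrightarrow> 2 - a < b" by presburger
    have hg': "1 \<le> a \<Longrightarrow> - a < height mu1 (nat (a - 1))" using hg by simp
    show ?thesis unfolding p Un_iff L S T using False e N1 hg' by (auto simp: HL_def)
  qed
qed

lemma strip_disj2: "\<Union>(strip N) \<inter> trs 1 1 (region (lamMN (M - 1) N) mu1) = {}"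
proof -
  have "p \<notin> trs 1 1 (region (lamMN (M - 1) N) mu1)" if "p \<in> \<Union>(strip N)" for p
  proof -
    obtain a b where ab: "p = (a, b)" by fastforce
    then have a: "p = (a, 1 - a)" "1 \<le> a" "a \<le> int N" using that by (auto simp: Union_strip)
    have "HL N (a - 1) = 1 - a" using a by (simp add: HL_def)
    moreover have "(a - 1, - a) \<in> region (lamMN (M - 1) N) mu1 \<Longrightarrow> HL N (a - 1) < - a"
    proof -
      assume "(a - 1, - a) \<in> region (lamMN (M - 1) N) mu1"
      then show ?thesis unfolding region_def using height_lam_HL[of "a - 1" "M - 1" N] by auto
    qed
    ultimately show ?thesis using a by auto
  qed
  then show ?thesis by blast
qed

lemma weakly2:
  assumes M1: "1 \<le> M" and len: "length mu1 + 1 = M + N"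
  shows "weakly_above (True # mu1) (lamMN M N) \<longleftrightarrow> weakly_above mu1 (lamMN (M - 1) N)"
proof -
  have A: "height (lamMN M N) (Suc y) \<le> 1 + height mu1 y \<longleftrightarrow> height (lamMN (M - 1) N) y \<le> height mu1 y"
    if "y \<le> M - 1 + N" for y
  proof -
    have "- int y \<le> height mu1 y" by (rule height_ge)
    then show ?thesis using height_lam[of "Suc y" M N] height_lam[of y "M - 1" N] that M1 by auto
  qed
  have "(\<forall>x \<le> M + N. height (lamMN M N) x \<le> height (True # mu1) x) \<longleftrightarrow>
        (\<forall>y \<le> M - 1 + N. height (lamMN (M - 1) N) y \<le> height mu1 y)"
  proof
    assume H: "\<forall>x \<le> M + N. height (lamMN M N) x \<le> height (True # mu1) x"
    show "\<forall>y \<le> M - 1 + N. height (lamMN (M - 1) N) y \<le> height mu1 y"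
    proof (intro allI impI)
      fix y assume y: "y \<le> M - 1 + N"
      then have "Suc y \<le> M + N" using M1 by simp
      then show "height (lamMN (M - 1) N) y \<le> height mu1 y" using H[rule_format, of "Suc y"] A[OF y] by simp
    qed
  next
    assume H: "\<forall>y \<le> M - 1 + N. height (lamMN (M - 1) N) y \<le> height mu1 y"
    show "\<forall>x \<le> M + N. height (lamMN M N) x \<le> height (True # mu1) x"
    proof (intro allI impI)
      fix x assume x: "x \<le> M + N"
      show "height (lamMN M N) x \<le> height (True # mu1) x"
      proof (cases x)
        case (Suc y)
        then have "y \<le> M - 1 + N" using x M1 by simp
        then show ?thesis using H A Suc by simp
      qed simp
    qed
  qed
  then show ?thesis using len M1 unfolding weakly_above_def by auto
qed

lemma CI_parts:
  assumes "CI R h L T"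
  shows "partition_on R T" "\<And>tau. tau \<in> T \<Longrightarrow> \<exists>n n'. ballot_tile tau n n'"
    "\<And>tau c. tau \<in> T \<Longrightarrow> snd (tile_len tau) \<ge> 1 \<Longrightarrow> c \<in> tau \<Longrightarrow> (\<forall>c'\<in>tau. fst c' \<le> fst c) \<Longrightarrow> fst c = L"
    "\<And>tau. tau \<in> T \<Longrightarrow> (\<forall>p\<in>tau. snd p - 1 \<le> h (fst p)) \<or> (\<exists>tau'\<in>T. shift_down tau \<subseteq> tau')"
  using assms unfolding CI_def by blast+

lemma CI_intro:
  assumes "partition_on R T" "\<And>tau. tau \<in> T \<Longrightarrow> \<exists>n n'. ballot_tile tau n n'"
    "\<And>tau c. tau \<in> T \<Longrightarrow> snd (tile_len tau) \<ge> 1 \<Longrightarrow> c \<in> tau \<Longrightarrow> (\<forall>c'\<in>tau. fst c' \<le> fst c) \<Longrightarrow> fst c = L"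
    "\<And>tau. tau \<in> T \<Longrightarrow> (\<forall>p\<in>tau. snd p - 1 \<le> h (fst p)) \<or> (\<exists>tau'\<in>T. shift_down tau \<subseteq> tau')"
  shows "CI R h L T"
  using assms unfolding CI_def by blast

lemma shift_down_single_iff: "shift_down {(a, b)} = {(a, b - 2)}"
  by (simp add: shift_down_trs)

lemma CI_add_strip:
  assumes ci: "CI R' (\<lambda>a. HL N (a - 1) + 1) L T'"
    and dis: "\<Union>(strip N) \<inter> R' = {}"
    and col: "\<And>p. p \<in> R' \<Longrightarrow> 2 \<le> fst p \<and> HL N (fst p - 1) + 1 < snd p"
  shows "CI (\<Union>(strip N) \<union> R') (HL N) L (strip N \<union> T')"
proof (rule CI_intro)
  note c = CI_parts[OF ci]
  show "partition_on (\<Union>(strip N) \<union> R') (strip N \<union> T')"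
    by (rule partition_on_Un[OF partition_strip c(1) dis])
  fix tau assume tau: "tau \<in> strip N \<union> T'"
  show "\<exists>n n'. ballot_tile tau n n'"
    using tau c(2) ballot_single by (auto simp: strip_def) blast
  show "\<And>c'. 1 \<le> snd (tile_len tau) \<Longrightarrow> c' \<in> tau \<Longrightarrow> \<forall>c''\<in>tau. fst c'' \<le> fst c' \<Longrightarrow> fst c' = L"
    using tau c(3) tile_len_strip by fastforce
  show "(\<forall>p\<in>tau. snd p - 1 \<le> HL N (fst p)) \<or> (\<exists>tau'\<in>strip N \<union> T'. shift_down tau \<subseteq> tau')"
  proof (cases "tau \<in> strip N")
    case True
    then obtain a where "tau = {(a, 1 - a)}" "a \<le> int N" by (auto simp: strip_def)
    then show ?thesis by (simp add: HL_def)
  next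
    case False
    then have tT: "tau \<in> T'" using tau by simp
    have sub: "tau \<subseteq> R'" using CI_subset[OF ci tT] .
    from c(4)[OF tT] show ?thesis
    proof
      assume bot: "\<forall>p\<in>tau. snd p - 1 \<le> HL N (fst p - 1) + 1"
      show ?thesis
      proof (cases "\<exists>p\<in>tau. fst p \<le> int N")
        case True
        then obtain a b where ab: "(a, b) \<in> tau" "a \<le> int N" by auto
        obtain a0 f n n' where tf: "tau = tile_of a0 f (2*n+n')" "brep f n n'"
          using CI_tile[OF ci tT] by metis
        have on: "f i = (HL N (a0 + int i - 1) + 1) + 1" if "i \<le> 2*n+n'" for i
        proof -
          have m: "(a0 + int i, f i) \<in> tau" unfolding tf using that by (rule tile_of_mem_i)
          then have "HL N (a0 + int i - 1) + 1 < f i" using col sub by fastforce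
          moreover have "f i - 1 \<le> HL N (a0 + int i - 1) + 1" using bot m by fastforce
          ultimately show ?thesis by simp
        qed
        have a_in: "a0 \<le> a" "a \<le> a0 + int (2*n+n')" using ab(1) unfolding tf mem_tile_of by auto
        have "(a0 + int 0, f 0) \<in> tau" unfolding tf by (rule tile_of_mem_i) simp
        then have a02: "2 \<le> a0" using col sub by fastforce
        have "a0 = a \<and> 2*n+n' = 0"
        proof (rule bottom_single[OF tf(1) tf(2) refl, of "\<lambda>x. HL N (x - 1) + 1"])
          show "\<And>i. i \<le> 2 * n + n' \<Longrightarrow> f i = HL N (a0 + int i - 1) + 1 + 1" using on by simp
          show "a0 \<le> a" "a \<le> a0 + int (2 * n + n')" using a_in by auto
          fix x assume "a0 \<le> x" "x < a"
          then show "HL N (a - 1) + 1 < HL N (x - 1) + 1" using ab(2) by (simp add: HL_def)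
        next
          show "HL N (a + 1 - 1) + 1 < HL N (a - 1) + 1" using ab(2) a02 a_in by (simp add: HL_def)
        qed
        then have "tau = {(a, f 0)}" using tf(1) by (simp add: tile_of_def)
        moreover have "f 0 = 3 - a" using on[of 0] \<open>a0 = a \<and> 2*n+n' = 0\<close> ab(2) by (simp add: HL_def)
        ultimately have "shift_down tau = {(a, 1 - a)}" by (simp add: shift_down_single_iff)
        moreover have "{(a, 1 - a)} \<in> strip N" using ab(2) a_in a02
          unfolding strip_def by (intro imageI) simp
        ultimately show ?thesis by auto
      next
        case False
        have "snd p - 1 \<le> HL N (fst p)" if "p \<in> tau" for p
        proof -
          have "fst p > int N" using False that by auto
          then have "HL N (fst p - 1) + 1 = HL N (fst p)" by (simp add: HL_def)
          then show ?thesis using bot that by fastforce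
        qed
        then have "\<forall>p\<in>tau. snd p - 1 \<le> HL N (fst p)" by blast
        then show ?thesis ..
      qed
    next
      assume "\<exists>tau'\<in>T'. shift_down tau \<subseteq> tau'"
      then show ?thesis by blast
    qed
  qed
qed

lemma CI_remove_strip:
  assumes ci: "CI (\<Union>(strip N) \<union> R') (HL N) L T"
    and sub: "strip N \<subseteq> T"
    and dis: "\<Union>(strip N) \<inter> R' = {}"
    and col: "\<And>p. p \<in> R' \<Longrightarrow> 2 \<le> fst p \<and> HL N (fst p - 1) + 1 < snd p"
  shows "CI R' (\<lambda>a. HL N (a - 1) + 1) L (T - strip N)"
proof (rule CI_intro)
  note c = CI_parts[OF ci]
  have "partition_on ((\<Union>(strip N) \<union> R') - \<Union>(strip N)) (T - strip N)"
    by (rule partition_on_Diff[OF c(1) sub])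
  moreover have "(\<Union>(strip N) \<union> R') - \<Union>(strip N) = R'" using dis by blast
  ultimately show P: "partition_on R' (T - strip N)" by simp
  fix tau assume tau: "tau \<in> T - strip N"
  then have tT: "tau \<in> T" by simp
  have tsub: "tau \<subseteq> R'" using P tau by (auto simp: partition_on_def)
  show "\<exists>n n'. ballot_tile tau n n'" using c(2) tT by blast
  show "\<And>c'. 1 \<le> snd (tile_len tau) \<Longrightarrow> c' \<in> tau \<Longrightarrow> \<forall>c''\<in>tau. fst c'' \<le> fst c' \<Longrightarrow> fst c' = L"
    using c(3) tT by blast
  from c(4)[OF tT]
  show "(\<forall>p\<in>tau. snd p - 1 \<le> HL N (fst p - 1) + 1) \<or> (\<exists>tau'\<in>T - strip N. shift_down tau \<subseteq> tau')"
  proof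
    assume bot: "\<forall>p\<in>tau. snd p - 1 \<le> HL N (fst p)"
    have "snd p - 1 \<le> HL N (fst p - 1) + 1" if "p \<in> tau" for p
    proof -
      have "2 \<le> fst p" "HL N (fst p - 1) + 1 < snd p" using col tsub that by blast+
      moreover have "snd p - 1 \<le> HL N (fst p)" using bot that by blast
      ultimately show ?thesis by (simp add: HL_def split: if_splits)
    qed
    then show ?thesis by blast
  next
    assume "\<exists>tau'\<in>T. shift_down tau \<subseteq> tau'"
    then obtain t' where t': "t' \<in> T" "shift_down tau \<subseteq> t'" by blast
    show ?thesis
    proof (cases "t' \<in> strip N")
      case True
      then obtain a where a: "t' = {(a, 1 - a)}" "1 \<le> a" "a \<le> int N" by (auto simp: strip_def)
      have "tau \<noteq> {}" using tT c(1) by (auto simp: partition_on_def)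
      then have "tau = {(a, 1 - a + 2)}" using shift_down_single[of tau a "1 - a"] t'(2) a(1) by simp
      then have "\<forall>p\<in>tau. snd p - 1 \<le> HL N (fst p - 1) + 1" using a by (simp add: HL_def)
      then show ?thesis ..
    next
      case False
      then show ?thesis using t' by blast
    qed
  qed
qed

lemma CI_lam_HL:
  "CI (region (lamMN M N) mu) (\<lambda>a. height (lamMN M N) (nat a)) L T \<longleftrightarrow> CI (region (lamMN M N) mu) (HL N) L T"
proof (rule CI_cong)
  fix p assume "p \<in> region (lamMN M N) mu"
  then have "0 \<le> fst p" "fst p \<le> int (M + N)" unfolding region_def by auto
  then show "height (lamMN M N) (nat (fst p)) = HL N (fst p)" by (rule height_lam_HL)
qed

lemma Items_lam_iff: "(mu, T) \<in> Items (lamMN M N) \<longleftrightarrow> weakly_above mu (lamMN M N) \<and>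
   CI (region (lamMN M N) mu) (HL N) (int (M + N)) T \<and> typeBI T"
  unfolding Items_iff CI_lam_HL by simp

lemma Items_finite_T: "(mu, T) \<in> Items lam \<Longrightarrow> finite T"
proof -
  assume "(mu, T) \<in> Items lam"
  then have "partition_on (region lam mu) T" unfolding Items_iff CI_def by simp
  moreover have "finite (region lam mu)" using region_bound[of lam mu] by (rule finite_subset) simp
  ultimately show "finite T" using finite_elements by blast
qed

lemma strip_trT_disj:
  assumes "partition_on R' T1"
  shows "strip N \<inter> trT 1 1 T1 = {} \<or> \<not> (\<Union>(strip N) \<inter> trs 1 1 R' = {})"
proof (rule disjCI)
  assume "\<not> \<not> (\<Union>(strip N) \<inter> trs 1 1 R' = {})"
  then have d: "\<Union>(strip N) \<inter> trs 1 1 R' = {}" by simp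
  show "strip N \<inter> trT 1 1 T1 = {}"
  proof (rule ccontr)
    assume "strip N \<inter> trT 1 1 T1 \<noteq> {}"
    then obtain t where t: "t \<in> strip N" "t \<in> trT 1 1 T1" by blast
    then obtain t1 where t1: "t1 \<in> T1" "t = trs 1 1 t1" by (auto simp: trT_def)
    have "t1 \<subseteq> R'" "t1 \<noteq> {}" using assms t1 by (auto simp: partition_on_def)
    then have "t \<subseteq> trs 1 1 R'" "t \<noteq> {}" using t1 by (auto simp: trs_def)
    moreover have "t \<subseteq> \<Union>(strip N)" using t(1) by blast
    ultimately show False using d by blast
  qed
qed

lemma class2_fwd:
  assumes M1: "1 \<le> M" and N1: "1 \<le> N" and it: "(mu1, T1) \<in> Items (lamMN (M - 1) N)"
  shows "(True # mu1, strip N \<union> trT 1 1 T1) \<in> Items (lamMN M N)"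
    and "strip N \<inter> trT 1 1 T1 = {}"
proof -
  let ?R2 = "region (lamMN (M - 1) N) mu1"
  have w: "weakly_above mu1 (lamMN (M - 1) N)" and ci: "CI ?R2 (HL N) (int (M - 1 + N)) T1" and bi: "typeBI T1"
    using it unfolding Items_lam_iff by auto
  have len: "length mu1 + 1 = M + N" using w M1 by (simp add: weakly_above_def)
  have ci2: "CI (trs 1 1 ?R2) (\<lambda>a. HL N (a - 1) + 1) (int (M + N)) (trT 1 1 T1)"
    using CI_tr[of 1 1 ?R2 "HL N" "int (M - 1 + N)" T1] ci M1 by (simp add: add.commute)
  have dis: "\<Union>(strip N) \<inter> trs 1 1 ?R2 = {}" by (rule strip_disj2)
  have l2: "length mu1 = M - 1 + N" using len M1 by simp
  have col: "2 \<le> fst p \<and> HL N (fst p - 1) + 1 < snd p" if "p \<in> trs 1 1 ?R2" for p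
  proof -
    obtain a b where p: "p = (a, b)" by fastforce
    then have "(a - 1, b - 1) \<in> ?R2" using that by simp
    then show ?thesis unfolding p mem_region_lam[OF l2] by auto
  qed
  have ci3: "CI (region (lamMN M N) (True # mu1)) (HL N) (int (M + N)) (strip N \<union> trT 1 1 T1)"
    unfolding region2[OF M1 N1 len] by (rule CI_add_strip[OF ci2 dis col])
  have dT: "strip N \<inter> trT 1 1 T1 = {}"
    using strip_trT_disj[of ?R2 T1 N] ci dis unfolding CI_def by blast
  then show "strip N \<inter> trT 1 1 T1 = {}" .
  have fT: "finite T1" using Items_finite_T[OF it] .
  have "typeBI (strip N \<union> trT 1 1 T1) \<longleftrightarrow> typeBI (trT 1 1 T1)"
  proof (rule typeBI_Un)
    show "\<forall>tau\<in>strip N. \<not> (even (snd (tile_len tau)) \<and> 2 \<le> snd (tile_len tau))"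
      using tile_len_strip by fastforce
    show "\<forall>n n'. odd n' \<longrightarrow> even (card {tau \<in> strip N. tile_len tau = (n, n')})"
    proof (intro allI impI)
      fix n n' :: nat assume "odd n'"
      then have e: "{tau \<in> strip N. tile_len tau = (n, n')} = {}" using tile_len_strip by fastforce
      show "even (card {tau \<in> strip N. tile_len tau = (n, n')})" unfolding e by simp
    qed
  qed (use fT dT in auto)
  then have "typeBI (strip N \<union> trT 1 1 T1)" using bi by simp
  moreover have "weakly_above (True # mu1) (lamMN M N)" using weakly2[OF M1 len] w by simp
  ultimately show "(True # mu1, strip N \<union> trT 1 1 T1) \<in> Items (lamMN M N)"
    unfolding Items_lam_iff using ci3 by simp
qed

lemma typeBI_strip_Un:
  assumes "finite X" "strip N \<inter> X = {}"
  shows "typeBI (strip N \<union> X) \<longleftrightarrow> typeBI X"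
proof (rule typeBI_Un)
  show "\<forall>tau\<in>strip N. \<not> (even (snd (tile_len tau)) \<and> 2 \<le> snd (tile_len tau))"
    using tile_len_strip by fastforce
  show "\<forall>n n'. odd n' \<longrightarrow> even (card {tau \<in> strip N. tile_len tau = (n, n')})"
  proof (intro allI impI)
    fix n n' :: nat assume "odd n'"
    then have e: "{tau \<in> strip N. tile_len tau = (n, n')} = {}" using tile_len_strip by fastforce
    show "even (card {tau \<in> strip N. tile_len tau = (n, n')})" unfolding e by simp
  qed
qed (use assms in auto)

lemma strip_Suc: "1 \<le> N \<Longrightarrow> strip N = insert {(int N, 1 - int N)} (strip (N - 1))"
proof -
  assume N: "1 \<le> N"
  then have "{1..int N} = insert (int N) {1..int (N - 1)}" by auto
  then show ?thesis unfolding strip_def by simp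
qed

lemma (in ustart) class2_bwd:
  assumes V: "{(int N, 1 - int N)} \<in> T"
  shows "strip N \<subseteq> T" "(mu1, trT (-1) (-1) (T - strip N)) \<in> Items (lamMN (M - 1) N)"
proof -
  show sub: "strip N \<subseteq> T" using strip_Suc[OF N1] strip_T V by simp
  let ?R2 = "region (lamMN (M - 1) N) mu1"
  let ?T1 = "trT (-1) (-1) (T - strip N)"
  have ci: "CI R (HL N) (int (M + N)) T" and bi: "typeBI T" and w: "weakly_above (True # mu1) (lamMN M N)"
    using it unfolding Items_lam_iff by auto
  have l2: "length mu1 = M - 1 + N" using len M1 by simp
  have col: "2 \<le> fst p \<and> HL N (fst p - 1) + 1 < snd p" if "p \<in> trs 1 1 ?R2" for p
  proof -
    obtain a b where p: "p = (a, b)" by fastforce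
    then have "(a - 1, b - 1) \<in> ?R2" using that by simp
    then show ?thesis unfolding p mem_region_lam[OF l2] by auto
  qed
  have ci2: "CI (trs 1 1 ?R2) (\<lambda>a. HL N (a - 1) + 1) (int (M + N)) (T - strip N)"
    by (rule CI_remove_strip[OF _ sub strip_disj2 col]) (use ci region2[OF M1 N1 len] in simp)
  have e: "trT 1 1 ?T1 = T - strip N" by simp
  have "CI ?R2 (HL N) (int (M - 1 + N)) ?T1"
    using CI_tr[of 1 1 ?R2 "HL N" "int (M - 1 + N)" ?T1] ci2 M1 e by (simp add: add.commute)
  moreover have "weakly_above mu1 (lamMN (M - 1) N)" using weakly2[OF M1 len] w by simp
  moreover have "typeBI ?T1"
  proof -
    have "T = strip N \<union> (T - strip N)" using sub by blast
    then have "typeBI (strip N \<union> (T - strip N))" using bi by simp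
    then have "typeBI (T - strip N)" using typeBI_strip_Un[of "T - strip N" N] finT by auto
    then show ?thesis by simp
  qed
  ultimately show "(mu1, ?T1) \<in> Items (lamMN (M - 1) N)" unfolding Items_lam_iff by simp
qed

lemma monom_add_mult: "monom (1::int) (a + b) = monom 1 a * monom 1 b"
  by (simp add: mult_monom)

lemma class2_sum:
  assumes M1: "1 \<le> M" and N1: "1 \<le> N"
  shows "(\<Sum>(mu, T) \<in> {(mu, T) \<in> Items (lamMN M N). hd mu = True \<and> {(int N, 1 - int N)} \<in> T}. monom (1::int) (art T))
    = monom 1 N * (\<Sum>(mu, T) \<in> Items (lamMN (M - 1) N). monom 1 (art T))"
proof -
  let ?g = "\<lambda>(mu1, T1). (True # mu1, strip N \<union> trT 1 1 T1)"
  let ?I2 = "{(mu, T) \<in> Items (lamMN M N). hd mu = True \<and> {(int N, 1 - int N)} \<in> T}"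
  have vs: "{(int N, 1 - int N)} \<in> strip N" unfolding strip_def using N1 by auto
  have inj: "inj_on ?g (Items (lamMN (M - 1) N))"
  proof (rule inj_onI)
    fix x y assume x: "x \<in> Items (lamMN (M - 1) N)" and y: "y \<in> Items (lamMN (M - 1) N)" and e: "?g x = ?g y"
    obtain mx Tx where xx: "x = (mx, Tx)" by fastforce
    obtain my Ty where yy: "y = (my, Ty)" by fastforce
    have d1: "strip N \<inter> trT 1 1 Tx = {}" using class2_fwd(2)[OF M1 N1] x xx by simp
    have d2: "strip N \<inter> trT 1 1 Ty = {}" using class2_fwd(2)[OF M1 N1] y yy by simp
    have "strip N \<union> trT 1 1 Tx = strip N \<union> trT 1 1 Ty" "mx = my" using e xx yy by auto
    then have "(strip N \<union> trT 1 1 Tx) - strip N = (strip N \<union> trT 1 1 Ty) - strip N" by simp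
    then have "trT 1 1 Tx = trT 1 1 Ty" using d1 d2 by blast
    then have "Tx = Ty" using inj_trT[THEN injD] by blast
    then show "x = y" using xx yy \<open>mx = my\<close> by simp
  qed
  have img: "?I2 = ?g ` Items (lamMN (M - 1) N)"
  proof (intro set_eqI iffI)
    fix x assume "x \<in> ?I2"
    then obtain mu T where x: "x = (mu, T)" "(mu, T) \<in> Items (lamMN M N)" "hd mu = True" "{(int N, 1 - int N)} \<in> T"
      by auto
    then have "length mu = M + N" by (simp add: Items_def weakly_above_def)
    then obtain mu1 where mu: "mu = True # mu1" using x(3) N1 by (cases mu) auto
    interpret ustart M N mu1 T using M1 N1 x(2) mu by unfold_locales simp_all
    have "(mu1, trT (-1) (-1) (T - strip N)) \<in> Items (lamMN (M - 1) N)" using class2_bwd(2)[OF x(4)] .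
    moreover have "?g (mu1, trT (-1) (-1) (T - strip N)) = x" using class2_bwd(1)[OF x(4)] x mu by auto
    ultimately show "x \<in> ?g ` Items (lamMN (M - 1) N)" by force
  next
    fix x assume "x \<in> ?g ` Items (lamMN (M - 1) N)"
    then obtain mu1 T1 where "x = ?g (mu1, T1)" "(mu1, T1) \<in> Items (lamMN (M - 1) N)" by auto
    then show "x \<in> ?I2" using class2_fwd(1)[OF M1 N1] vs by auto
  qed
  have art: "art (strip N \<union> trT 1 1 T1) = N + art T1" if "(mu1, T1) \<in> Items (lamMN (M - 1) N)" for mu1 T1
  proof -
    have "art (strip N \<union> trT 1 1 T1) = N + art (trT 1 1 T1)"
      by (rule art_Un) (use that class2_fwd(2)[OF M1 N1 that] Items_finite_T[OF that] sum_wt_strip in auto)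
    then show ?thesis by simp
  qed
  have "(\<Sum>(mu, T) \<in> ?I2. monom (1::int) (art T)) = (\<Sum>x \<in> Items (lamMN (M - 1) N). monom 1 (art (snd (?g x))))"
    unfolding img by (subst sum.reindex[OF inj]) (simp add: case_prod_beta)
  also have "\<dots> = (\<Sum>x \<in> Items (lamMN (M - 1) N). monom 1 N * monom 1 (art (snd x)))"
  proof (rule sum.cong[OF refl])
    fix x assume "x \<in> Items (lamMN (M - 1) N)"
    then show "monom 1 (art (snd (?g x))) = monom 1 N * monom (1::int) (art (snd x))"
      using art[of "fst x" "snd x"] by (simp add: case_prod_beta monom_add_mult)
  qed
  also have "\<dots> = monom 1 N * (\<Sum>(mu, T) \<in> Items (lamMN (M - 1) N). monom 1 (art T))"
    by (simp add: sum_distrib_left case_prod_beta)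
  finally show ?thesis .
qed

section \<open>Class 3\<close>

lemma HL_ge: "2 \<le> N \<Longrightarrow> HL N a \<le> HL (N - 2) (a - 1) + 1"
  by (simp add: HL_def)

lemma region3:
  assumes M1: "1 \<le> M" and N2: "2 \<le> N" and len: "length mu1 + 1 = M + N"
    and Bsub: "Atile M N 3 \<subseteq> region (lamMN M N) (True # mu1)"
  shows "region (lamMN M N) (True # mu1) =
     \<Union>(strip (N - 1)) \<union> Atile M N 1 \<union> Atile M N 3 \<union> trs 1 1 (region (lamMN (M + 1) (N - 2)) mu1)"
    (is "?L = ?S \<union> ?A \<union> ?B \<union> ?T")
proof (intro set_eqI)
  fix p :: box
  obtain a b where p: "p = (a, b)" by fastforce
  have l3: "length mu1 = M + 1 + (N - 2)" using len N2 by simp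
  let ?m = "height mu1 (nat (a - 1))"
  have T: "(a, b) \<in> ?T \<longleftrightarrow> odd (a + b) \<and> 2 \<le> a \<and> a \<le> int (M + N) \<and> HL (N - 2) (a - 1) + 1 < b \<and> b < 1 + ?m"
    using mem_region_lam[OF l3, of "a - 1" "b - 1"] N2 by (auto simp: algebra_simps)
  have L: "(a, b) \<in> ?L \<longleftrightarrow> odd (a + b) \<and> 1 \<le> a \<and> a \<le> int (M + N) \<and> HL N a < b \<and> b < 1 + ?m"
    by (rule mem_region_lam_True[OF len])
  have S: "(a, b) \<in> ?S \<longleftrightarrow> 1 \<le> a \<and> a \<le> int N - 1 \<and> b = 1 - a"
    using N2 by (simp add: Union_strip)
  have A: "(a, b) \<in> ?A \<longleftrightarrow> int N \<le> a \<and> a \<le> int N + int M \<and> b = 1 + a - 2 * int N"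
    by (simp add: mem_Atile)
  have B: "(a, b) \<in> ?B \<longleftrightarrow> int N \<le> a \<and> a \<le> int N + int M \<and> b = 3 + a - 2 * int N"
    by (simp add: mem_Atile)
  have Bf: "int N \<le> a \<Longrightarrow> a \<le> int N + int M \<Longrightarrow> 3 + a - 2 * int N < 1 + ?m"
  proof -
    assume "int N \<le> a" "a \<le> int N + int M"
    then have "(a, 3 + a - 2 * int N) \<in> ?B" by (simp add: mem_Atile)
    then have "(a, 3 + a - 2 * int N) \<in> ?L" using Bsub by blast
    then show ?thesis unfolding mem_region_lam_True[OF len] by blast
  qed
  have hg: "- int (nat (a - 1)) \<le> ?m" by (rule height_ge)
  show "p \<in> ?L \<longleftrightarrow> p \<in> ?S \<union> ?A \<union> ?B \<union> ?T"
  proof (cases "a \<le> int N - 1")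
    case True
    show ?thesis
    proof (cases "a = 1")
      case True
      then show ?thesis unfolding p Un_iff L S A B T using N2 by (auto simp: HL_def)
    next
      case False
      have hg': "1 \<le> a \<Longrightarrow> - a < ?m" using hg by simp
      have e: "odd (a + b) \<Longrightarrow> - a < b \<Longrightarrow> b \<noteq> 1 - a \<Longrightarrow> 2 - a < b" by presburger
      show ?thesis unfolding p Un_iff L S A B T using True False e hg' N2 by (auto simp: HL_def)
    qed
  next
    case False
    then have aN: "int N \<le> a" by simp
    have h1: "HL N a = a - 2 * int N" using aN by (simp add: HL_def)
    have h2: "HL (N - 2) (a - 1) + 1 = a - 2 * int N + 4" using aN N2 by (simp add: HL_def)
    have e: "odd (a + b) \<Longrightarrow> a - 2 * int N < b \<Longrightarrow> b \<noteq> 1 + a - 2 * int N \<Longrightarrow> b \<noteq> 3 + a - 2 * int N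
      \<Longrightarrow> a - 2 * int N + 4 < b" by presburger
    have e2: "b = 1 + a - 2 * int N \<Longrightarrow> odd (a + b)" "b = 3 + a - 2 * int N \<Longrightarrow> odd (a + b)" by presburger+
    show ?thesis unfolding p Un_iff L S A B T h1 h2 using aN e e2 Bf N2 False
      by (auto simp: algebra_simps)
  qed
qed

lemma weakly3_fwd:
  assumes M1: "1 \<le> M" and N2: "2 \<le> N" and w: "weakly_above mu1 (lamMN (M + 1) (N - 2))"
  shows "weakly_above (True # mu1) (lamMN M N)" "Atile M N 3 \<subseteq> region (lamMN M N) (True # mu1)"
proof -
  have len: "length mu1 + 1 = M + N" using w N2 by (simp add: weakly_above_def)
  have H: "height (lamMN (M + 1) (N - 2)) y \<le> height mu1 y" if "y \<le> M + N - 1" for y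
    using w that N2 unfolding weakly_above_def by simp
  have l3: "height (lamMN (M + 1) (N - 2)) y = (if y \<le> N - 2 then - int y else int y - 2 * int (N - 2))"
    if "y \<le> M + N - 1" for y using height_lam[of y "M + 1" "N - 2"] that N2 by simp
  have "height (lamMN M N) x \<le> height (True # mu1) x" if "x \<le> M + N" for x
  proof (cases x)
    case (Suc y)
    then have y: "y \<le> M + N - 1" using that by simp
    have "height (lamMN M N) (Suc y) \<le> 1 + height (lamMN (M + 1) (N - 2)) y"
      using height_lam[of "Suc y" M N] l3[OF y] that Suc N2 by auto
    then show ?thesis using H[OF y] Suc by simp
  qed simp
  then show "weakly_above (True # mu1) (lamMN M N)" using len by (simp add: weakly_above_def)
  show "Atile M N 3 \<subseteq> region (lamMN M N) (True # mu1)"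
  proof
    fix p assume "p \<in> Atile M N 3"
    then obtain a b where p: "p = (a, b)" "int N \<le> a" "a \<le> int N + int M" "b = 3 + a - 2 * int N"
      by (cases p) (auto simp: mem_Atile)
    have y: "nat (a - 1) \<le> M + N - 1" using p N2 by simp
    have "height (lamMN (M + 1) (N - 2)) (nat (a - 1)) = a - 1 - 2 * int (N - 2)"
      using l3[OF y] p N2 by auto
    then have "a - 1 - 2 * int (N - 2) \<le> height mu1 (nat (a - 1))" using H[OF y] by simp
    moreover have "odd (a + b)" using p(4) by presburger
    ultimately show "p \<in> region (lamMN M N) (True # mu1)"
      unfolding p(1) mem_region_lam_True[OF len] using p N2 by (simp add: HL_def)
  qed
qed

lemma weakly3_bwd:
  assumes M1: "1 \<le> M" and N2: "2 \<le> N" and len: "length mu1 + 1 = M + N"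
    and Bsub: "Atile M N 3 \<subseteq> region (lamMN M N) (True # mu1)"
  shows "weakly_above mu1 (lamMN (M + 1) (N - 2))"
proof -
  have "height (lamMN (M + 1) (N - 2)) y \<le> height mu1 y" if y: "y \<le> M + 1 + (N - 2)" for y
  proof (cases "y \<le> N - 2")
    case True
    then show ?thesis using height_lam[of y "M + 1" "N - 2"] y height_ge[of y mu1] by simp
  next
    case False
    let ?a = "int y + 1"
    have "int N \<le> ?a" "?a \<le> int N + int M" using False y N2 by linarith+
    then have "(?a, 3 + ?a - 2 * int N) \<in> Atile M N 3" by (simp add: mem_Atile)
    then have "(?a, 3 + ?a - 2 * int N) \<in> region (lamMN M N) (True # mu1)" using Bsub by blast
    then have "3 + ?a - 2 * int N < 1 + height mu1 (nat (?a - 1))" unfolding mem_region_lam_True[OF len] by blast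
    then show ?thesis using height_lam[of y "M + 1" "N - 2"] y False N2 by simp
  qed
  then show ?thesis using len N2 by (simp add: weakly_above_def)
qed

definition E3 :: "nat \<Rightarrow> nat \<Rightarrow> box set set" where
  "E3 M N = strip (N - 1) \<union> {Atile M N 1, Atile M N 3}"

lemma CI_tile_obtain:
  assumes "CI R h L T" "tau \<in> T"
  obtains a0 f n n' where "tau = tile_of a0 f (2*n+n')" "brep f n n'" "tile_len tau = (n, n')"
  using CI_tile[OF assms] by (metis prod.collapse)

lemma Atile_anchor:
  assumes "c \<in> Atile M N c0" "\<forall>c'\<in>Atile M N c0. fst c' \<le> fst c"
  shows "fst c = int N + int M"
proof -
  have "(int N + int M, c0 + int M - int N) \<in> Atile M N c0" by (simp add: mem_Atile)
  then have "int N + int M \<le> fst c" using assms(2) by fastforce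
  moreover have "fst c \<le> int N + int M" using assms(1) by (cases c) (simp add: mem_Atile)
  ultimately show ?thesis by simp
qed

lemma Atile_ne: "Atile M N c \<noteq> {}"
  by (simp add: Atile_def)

lemma Atile_13_disj: "Atile M N 1 \<inter> Atile M N 3 = {}"
  by (auto simp: mem_Atile)

lemma Atile_13_ne: "Atile M N 1 \<noteq> Atile M N 3"
  using Atile_13_disj Atile_ne by blast

lemma strip_Atile_disj: "\<Union>(strip (N - 1)) \<inter> Atile M N c = {}"
  by (auto simp: Union_strip mem_Atile)

lemma Atile_notin_strip: "1 \<le> M \<Longrightarrow> Atile M N c \<notin> strip K"
proof
  assume "1 \<le> M" "Atile M N c \<in> strip K"
  then have "card (Atile M N c) = 1" by (auto simp: strip_def)
  then show False using card_Atile \<open>1 \<le> M\<close> by simp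
qed

lemma Union_E3: "\<Union>(E3 M N) = \<Union>(strip (N - 1)) \<union> Atile M N 1 \<union> Atile M N 3"
  by (auto simp: E3_def)

lemma finite_E3[simp]: "finite (E3 M N)"
  by (simp add: E3_def)

lemma partition_E3: "partition_on (\<Union>(E3 M N)) (E3 M N)"
proof -
  have p1: "partition_on (Atile M N 1 \<union> Atile M N 3) {Atile M N 1, Atile M N 3}"
  proof (rule partition_onI)
    show "{} \<notin> {Atile M N 1, Atile M N 3}" using Atile_ne by (metis empty_iff insert_iff)
  qed (use Atile_13_disj in \<open>auto simp: disjnt_def\<close>)
  have "partition_on (\<Union>(strip (N - 1)) \<union> (Atile M N 1 \<union> Atile M N 3)) (strip (N - 1) \<union> {Atile M N 1, Atile M N 3})"
    by (rule partition_on_Un[OF partition_strip p1]) (use strip_Atile_disj in blast)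
  moreover have "\<Union>(E3 M N) = \<Union>(strip (N - 1)) \<union> (Atile M N 1 \<union> Atile M N 3)" unfolding Union_E3 by blast
  ultimately show ?thesis unfolding E3_def by simp
qed

lemma sum_wt_E3:
  assumes "1 \<le> M" "1 \<le> N"
  shows "(\<Sum>tau\<in>E3 M N. wt tau) = 2 * (M + N)"
proof -
  have "Atile M N 1 \<notin> insert (Atile M N 3) (strip (N - 1))"
    using Atile_notin_strip[OF assms(1)] Atile_13_ne by simp
  moreover have "Atile M N 3 \<notin> strip (N - 1)" using Atile_notin_strip[OF assms(1)] by simp
  ultimately have "(\<Sum>tau\<in>E3 M N. wt tau) = wt (Atile M N 1) + (wt (Atile M N 3) + (\<Sum>tau\<in>strip (N - 1). wt tau))"
    unfolding E3_def by simp
  also have "\<dots> = 2 * (M + N)" using sum_wt_strip[of "N - 1"] wt_Atile[OF assms(1)] assms by simp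
  finally show ?thesis .
qed

lemma typeBI_E3_Un:
  assumes M1: "1 \<le> M" and odd: "odd M" and fin: "finite X" and dis: "E3 M N \<inter> X = {}"
  shows "typeBI (E3 M N \<union> X) \<longleftrightarrow> typeBI X"
proof (rule typeBI_Un[OF finite_E3 fin dis])
  show "\<forall>tau\<in>E3 M N. \<not> (even (snd (tile_len tau)) \<and> 2 \<le> snd (tile_len tau))"
    using tile_len_strip odd by (auto simp: E3_def)
  show "\<forall>n n'. odd n' \<longrightarrow> even (card {tau \<in> E3 M N. tile_len tau = (n, n')})"
  proof (intro allI impI)
    fix n n' :: nat assume o: "odd n'"
    show "even (card {tau \<in> E3 M N. tile_len tau = (n, n')})"
    proof (cases "(n, n') = (0, M)")
      case True
      have "{tau \<in> E3 M N. tile_len tau = (n, n')} = {Atile M N 1, Atile M N 3}"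
        using True tile_len_strip M1 by (auto simp: E3_def)
      then show ?thesis using Atile_13_ne by simp
    next
      case False
      have "tile_len tau \<noteq> (n, n')" if "tau \<in> E3 M N" for tau
      proof (cases "tau \<in> strip (N - 1)")
        case True
        then show ?thesis using tile_len_strip o by fastforce
      next
        case False
        then have "tau = Atile M N 1 \<or> tau = Atile M N 3" using that by (simp add: E3_def)
        then show ?thesis using False \<open>(n, n') \<noteq> (0, M)\<close> by auto
      qed
      then have e: "{tau \<in> E3 M N. tile_len tau = (n, n')} = {}" by blast
      show ?thesis unfolding e by simp
    qed
  qed
qed

lemma H3_left: "2 \<le> N \<Longrightarrow> a \<le> int N - 1 \<Longrightarrow> HL (N - 2) (a - 1) + 1 = 2 - a"
  by (simp add: HL_def)

lemma H3_right: "2 \<le> N \<Longrightarrow> int N \<le> a \<Longrightarrow> HL (N - 2) (a - 1) + 1 = a - 2 * int N + 4"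
  by (simp add: HL_def)

lemma HL_right: "int N \<le> a \<Longrightarrow> HL N a = a - 2 * int N"
  by (simp add: HL_def)

lemma CI_add_E3:
  assumes ci: "CI R' (\<lambda>a. HL (N - 2) (a - 1) + 1) (int (M + N)) T'"
    and bi: "typeBI T'"
    and M1: "1 \<le> M" and odd: "odd M" and N2: "2 \<le> N"
    and dis: "\<Union>(E3 M N) \<inter> R' = {}"
    and col: "\<And>p. p \<in> R' \<Longrightarrow> 2 \<le> fst p \<and> fst p \<le> int (M + N) \<and> HL (N - 2) (fst p - 1) + 1 < snd p"
  shows "CI (\<Union>(E3 M N) \<union> R') (HL N) (int (M + N)) (E3 M N \<union> T')"
proof (rule CI_intro)
  note c = CI_parts[OF ci]
  let ?H = "\<lambda>a. HL (N - 2) (a - 1) + 1"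
  show "partition_on (\<Union>(E3 M N) \<union> R') (E3 M N \<union> T')"
    by (rule partition_on_Un[OF partition_E3 c(1) dis])
  fix tau assume tau: "tau \<in> E3 M N \<union> T'"
  show "\<exists>n n'. ballot_tile tau n n'"
  proof (cases "tau \<in> E3 M N")
    case True
    then consider "tau \<in> strip (N - 1)" | "tau = Atile M N 1" | "tau = Atile M N 3" by (auto simp: E3_def)
    then show ?thesis
    proof cases
      case 1
      then obtain a where "tau = {(a, 1 - a)}" by (auto simp: strip_def)
      then show ?thesis using ballot_single by blast
    qed (use ballot_Atile in blast)+
  qed (use tau c(2) in auto)
  show "\<And>c'. 1 \<le> snd (tile_len tau) \<Longrightarrow> c' \<in> tau \<Longrightarrow> \<forall>c''\<in>tau. fst c'' \<le> fst c' \<Longrightarrow> fst c' = int (M + N)"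
  proof -
    fix c' assume a: "1 \<le> snd (tile_len tau)" "c' \<in> tau" "\<forall>c''\<in>tau. fst c'' \<le> fst c'"
    show "fst c' = int (M + N)"
    proof (cases "tau \<in> E3 M N")
      case True
      then consider "tau \<in> strip (N - 1)" | "tau = Atile M N 1" | "tau = Atile M N 3" by (auto simp: E3_def)
      then show ?thesis
      proof cases
        case 1 then show ?thesis using a(1) tile_len_strip by fastforce
      next
        case 2 then show ?thesis using a(2,3) Atile_anchor[of c' M N 1] by simp
      next
        case 3 then show ?thesis using a(2,3) Atile_anchor[of c' M N 3] by simp
      qed
    next
      case False
      then show ?thesis using tau c(3) a by auto
    qed
  qed
  show "(\<forall>p\<in>tau. snd p - 1 \<le> HL N (fst p)) \<or> (\<exists>tau'\<in>E3 M N \<union> T'. shift_down tau \<subseteq> tau')"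
  proof (cases "tau \<in> E3 M N")
    case True
    then consider (s) "tau \<in> strip (N - 1)" | (A) "tau = Atile M N 1" | (B) "tau = Atile M N 3"
      by (auto simp: E3_def)
    then show ?thesis
    proof cases
      case s
      then obtain a where "tau = {(a, 1 - a)}" "a \<le> int N - 1" using N2 by (auto simp: strip_def)
      then show ?thesis by (simp add: HL_def)
    next
      case A
      have "\<forall>p\<in>tau. snd p - 1 \<le> HL N (fst p)"
      proof
        fix p assume "p \<in> tau"
        then show "snd p - 1 \<le> HL N (fst p)" using A by (cases p) (simp add: mem_Atile HL_def)
      qed
      then show ?thesis ..
    next
      case B
      have "shift_down tau = Atile M N 1" unfolding B shift_down_trs trs_Atile by simp
      moreover have "Atile M N 1 \<in> E3 M N" by (simp add: E3_def)
      ultimately show ?thesis by auto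
    qed
  next
    case False
    then have tT: "tau \<in> T'" using tau by simp
    have sub: "tau \<subseteq> R'" using CI_subset[OF ci tT] .
    from c(4)[OF tT] show ?thesis
    proof
      assume bot: "\<forall>p\<in>tau. snd p - 1 \<le> ?H (fst p)"
      obtain a0 f n n' where tf: "tau = tile_of a0 f (2*n+n')" "brep f n n'" "tile_len tau = (n, n')"
        using CI_tile_obtain[OF ci tT] by metis
      have mem: "(a0 + int i, f i) \<in> tau" if "i \<le> 2*n+n'" for i unfolding tf using that by (rule tile_of_mem_i)
      have on: "f i = ?H (a0 + int i) + 1" if "i \<le> 2*n+n'" for i
      proof -
        have "?H (a0 + int i) < f i" using col sub mem[OF that] by fastforce
        moreover have "f i - 1 \<le> ?H (a0 + int i)" using bot mem[OF that] by fastforce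
        ultimately show ?thesis by simp
      qed
      have a02: "2 \<le> a0" using col sub mem[of 0] by fastforce
      have aL: "a0 + int (2*n+n') \<le> int (M + N)" using col sub mem[of "2*n+n'"] by fastforce
      consider (c1) "a0 \<le> int N - 2" | (c2) "a0 = int N - 1" | (c3) "int N \<le> a0" by linarith
      then show ?thesis
      proof cases
        case c1
        have "a0 = a0 \<and> 2*n+n' = 0"
        proof (rule bottom_single[OF tf(1) tf(2) refl, of ?H])
          show "\<And>i. i \<le> 2 * n + n' \<Longrightarrow> f i = ?H (a0 + int i) + 1" using on by simp
        next
          show "HL (N - 2) (a0 + 1 - 1) + 1 < HL (N - 2) (a0 - 1) + 1" using c1 N2 by (simp add: HL_def)
        qed simp_all
        then have "tau = {(a0, f 0)}" using tf(1) by (simp add: tile_of_def)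
        moreover have "f 0 = 3 - a0" using on[of 0] c1 N2 by (simp add: HL_def)
        ultimately have "shift_down tau = {(a0, 1 - a0)}" by (simp add: shift_down_single_iff)
        moreover have "{(a0, 1 - a0)} \<in> E3 M N" using c1 a02 N2
          unfolding E3_def strip_def by (intro UnI1 imageI) simp
        ultimately show ?thesis by auto
      next
        case c2
        have fi: "f i = 4 - int N + int i" if "i \<le> 2*n+n'" for i
          using on[OF that] c2 N2 by (simp add: HL_def)
        have n0: "n = 0" using brep_increasing[OF tf(2)] fi by simp
        show ?thesis
        proof (cases "n' = 0")
          case True
          then have "tau = {(a0, f 0)}" using tf(1) n0 by (simp add: tile_of_def)
          then have "shift_down tau = {(int N - 1, 1 - (int N - 1))}" using fi[of 0] c2 by (simp add: shift_down_single_iff)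
          moreover have "{(int N - 1, 1 - (int N - 1))} \<in> E3 M N" using N2
            unfolding E3_def strip_def by (intro UnI1 imageI) simp
          ultimately show ?thesis by auto
        next
          case False
          let ?c = "(a0 + int n', f n')"
          have cm: "?c \<in> tau" using mem[of n'] n0 by simp
          have mx: "\<forall>c'\<in>tau. fst c' \<le> fst ?c" unfolding tf n0 by (auto simp: mem_tile_of')
          have "fst ?c = int (M + N)" using c(3)[OF tT _ cm mx] False tf(3) by simp
          then have "n' = M + 1" using c2 by simp
          then have "tile_len tau = (0, M + 1)" using tf(3) n0 by simp
          moreover have "\<not> (even (snd (tile_len tau)) \<and> 2 \<le> snd (tile_len tau))" using bi tT by (simp add: typeBI_def)
          ultimately show ?thesis using odd M1 by simp
        qed
      next
        case c3
        have "shift_down tau \<subseteq> Atile M N 3"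
        proof
          fix q assume "q \<in> shift_down tau"
          then obtain p where p: "p \<in> tau" "q = (fst p, snd p - 2)"
            unfolding shift_down_def by auto
          obtain i where i: "i \<le> 2*n+n'" "p = (a0 + int i, f i)" using p(1) unfolding tf tile_of_def by auto
          have "f i = a0 + int i - 2 * int N + 5" using on[OF i(1)] c3 N2 by (simp add: HL_def)
          moreover have "a0 + int i \<le> int (M + N)" using aL i(1) by simp
          ultimately show "q \<in> Atile M N 3" using p(2) i c3 by (simp add: mem_Atile)
        qed
        moreover have "Atile M N 3 \<in> E3 M N" by (simp add: E3_def)
        ultimately show ?thesis by blast
      qed
    next
      assume "\<exists>tau'\<in>T'. shift_down tau \<subseteq> tau'"
      then show ?thesis by blast
    qed
  qed
qed

lemma CI_remove_E3:
  assumes ci: "CI (\<Union>(E3 M N) \<union> R') (HL N) L T"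
    and sub: "E3 M N \<subseteq> T" and N2: "2 \<le> N"
    and dis: "\<Union>(E3 M N) \<inter> R' = {}"
    and col: "\<And>p. p \<in> R' \<Longrightarrow> 2 \<le> fst p \<and> HL (N - 2) (fst p - 1) + 1 < snd p"
  shows "CI R' (\<lambda>a. HL (N - 2) (a - 1) + 1) L (T - E3 M N)"
proof (rule CI_intro)
  note c = CI_parts[OF ci]
  have "partition_on ((\<Union>(E3 M N) \<union> R') - \<Union>(E3 M N)) (T - E3 M N)"
    by (rule partition_on_Diff[OF c(1) sub])
  moreover have "(\<Union>(E3 M N) \<union> R') - \<Union>(E3 M N) = R'" using dis by blast
  ultimately show P: "partition_on R' (T - E3 M N)" by simp
  fix tau assume tau: "tau \<in> T - E3 M N"
  then have tT: "tau \<in> T" by simp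
  have tsub: "tau \<subseteq> R'" using P tau by (auto simp: partition_on_def)
  have tne: "tau \<noteq> {}" using tT c(1) by (auto simp: partition_on_def)
  show "\<exists>n n'. ballot_tile tau n n'" using c(2) tT by blast
  show "\<And>c'. 1 \<le> snd (tile_len tau) \<Longrightarrow> c' \<in> tau \<Longrightarrow> \<forall>c''\<in>tau. fst c'' \<le> fst c' \<Longrightarrow> fst c' = L"
    using c(3) tT by blast
  from c(4)[OF tT]
  show "(\<forall>p\<in>tau. snd p - 1 \<le> HL (N - 2) (fst p - 1) + 1) \<or> (\<exists>tau'\<in>T - E3 M N. shift_down tau \<subseteq> tau')"
  proof
    assume bot: "\<forall>p\<in>tau. snd p - 1 \<le> HL N (fst p)"
    have "snd p - 1 \<le> HL (N - 2) (fst p - 1) + 1" if "p \<in> tau" for p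
      using bot that HL_ge[OF N2, of "fst p"] by fastforce
    then show ?thesis by blast
  next
    assume "\<exists>tau'\<in>T. shift_down tau \<subseteq> tau'"
    then obtain t' where t': "t' \<in> T" "shift_down tau \<subseteq> t'" by blast
    show ?thesis
    proof (cases "t' \<in> E3 M N")
      case True
      then consider (s) "t' \<in> strip (N - 1)" | (A) "t' = Atile M N 1" | (B) "t' = Atile M N 3"
        by (auto simp: E3_def)
      then show ?thesis
      proof cases
        case s
        then obtain a where a: "t' = {(a, 1 - a)}" "1 \<le> a" "a \<le> int N - 1" using N2 by (auto simp: strip_def)
        then have "tau = {(a, 1 - a + 2)}" using shift_down_single[of tau a "1 - a"] t'(2) tne by simp
        then have "\<forall>p\<in>tau. snd p - 1 \<le> HL (N - 2) (fst p - 1) + 1" using a N2 by (simp add: HL_def)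
        then show ?thesis ..
      next
        case A
        have "trs 0 2 (shift_down tau) \<subseteq> trs 0 2 (Atile M N 1)" using t'(2) A by simp
        then have s3: "tau \<subseteq> Atile M N 3" unfolding shift_down_trs trs_Atile by simp
        have "Atile M N 3 \<in> T" "tau \<noteq> Atile M N 3" using sub tau by (auto simp: E3_def)
        then have "tau \<inter> Atile M N 3 = {}" using c(1) tT unfolding partition_on_def pairwise_def disjnt_def by blast
        then show ?thesis using s3 tne by blast
      next
        case B
        have "trs 0 2 (shift_down tau) \<subseteq> trs 0 2 (Atile M N 3)" using t'(2) B by simp
        then have s5: "tau \<subseteq> Atile M N 5" unfolding shift_down_trs trs_Atile by simp
        have "snd p - 1 \<le> HL (N - 2) (fst p - 1) + 1" if "p \<in> tau" for p
        proof -
          obtain x y where p: "p = (x, y)" by fastforce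
          then have "int N \<le> x" "y = 5 + x - 2 * int N" using s5 that by (auto simp: mem_Atile)
          then show ?thesis using p N2 by (simp add: HL_def)
        qed
        then show ?thesis by blast
      qed
    next
      case False
      then show ?thesis using t' by blast
    qed
  qed
qed

lemma E_trT_disj:
  assumes "partition_on R' T1" "\<Union>E \<inter> trs 1 1 R' = {}"
  shows "E \<inter> trT 1 1 T1 = {}"
proof (rule ccontr)
  assume "E \<inter> trT 1 1 T1 \<noteq> {}"
  then obtain t where t: "t \<in> E" "t \<in> trT 1 1 T1" by blast
  then obtain t1 where t1: "t1 \<in> T1" "t = trs 1 1 t1" by (auto simp: trT_def)
  have "t1 \<subseteq> R'" "t1 \<noteq> {}" using assms t1 by (auto simp: partition_on_def)
  then have "t \<subseteq> trs 1 1 R'" "t \<noteq> {}" using t1 by (auto simp: trs_def)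
  moreover have "t \<subseteq> \<Union>E" using t(1) by blast
  ultimately show False using assms(2) by blast
qed

lemma col3:
  assumes N2: "2 \<le> N" and l3: "length mu1 = M + 1 + (N - 2)"
    and p: "p \<in> trs 1 1 (region (lamMN (M + 1) (N - 2)) mu1)"
  shows "2 \<le> fst p \<and> fst p \<le> int (M + N) \<and> HL (N - 2) (fst p - 1) + 1 < snd p"
proof -
  obtain a b where pp: "p = (a, b)" by fastforce
  then have "(a - 1, b - 1) \<in> region (lamMN (M + 1) (N - 2)) mu1" using p by simp
  then show ?thesis unfolding pp mem_region_lam[OF l3] using N2 by auto
qed

lemma disj3:
  assumes N2: "2 \<le> N" and l3: "length mu1 = M + 1 + (N - 2)"
  shows "\<Union>(E3 M N) \<inter> trs 1 1 (region (lamMN (M + 1) (N - 2)) mu1) = {}"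
proof -
  have "p \<notin> \<Union>(E3 M N)" if "p \<in> trs 1 1 (region (lamMN (M + 1) (N - 2)) mu1)" for p
  proof -
    obtain a b where pp: "p = (a, b)" by fastforce
    have c: "HL (N - 2) (a - 1) + 1 < b" using col3[OF N2 l3 that] pp by simp
    show ?thesis
    proof (cases "a \<le> int N - 1")
      case True
      then show ?thesis using c pp N2 unfolding Union_E3 by (auto simp: Union_strip mem_Atile HL_def)
    next
      case False
      then show ?thesis using c pp N2 unfolding Union_E3 by (auto simp: Union_strip mem_Atile HL_def)
    qed
  qed
  then show ?thesis by blast
qed

lemma class3_fwd:
  assumes M1: "1 \<le> M" and odd: "odd M" and N2: "2 \<le> N"
    and it: "(mu1, T2) \<in> Items (lamMN (M + 1) (N - 2))"
  shows "(True # mu1, E3 M N \<union> trT 1 1 T2) \<in> Items (lamMN M N)"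
    and "E3 M N \<inter> trT 1 1 T2 = {}"
proof -
  let ?R3 = "region (lamMN (M + 1) (N - 2)) mu1"
  have w: "weakly_above mu1 (lamMN (M + 1) (N - 2))" and ci: "CI ?R3 (HL (N - 2)) (int (M + 1 + (N - 2))) T2"
    and bi: "typeBI T2"
    using it unfolding Items_lam_iff by auto
  have l3: "length mu1 = M + 1 + (N - 2)" using w by (simp add: weakly_above_def)
  have len: "length mu1 + 1 = M + N" using l3 N2 by simp
  have ci2: "CI (trs 1 1 ?R3) (\<lambda>a. HL (N - 2) (a - 1) + 1) (int (M + N)) (trT 1 1 T2)"
    using CI_tr[of 1 1 ?R3 "HL (N - 2)" "int (M + 1 + (N - 2))" T2] ci N2 by (simp add: add.commute)
  have dis: "\<Union>(E3 M N) \<inter> trs 1 1 ?R3 = {}" by (rule disj3[OF N2 l3])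
  have ci3: "CI (\<Union>(E3 M N) \<union> trs 1 1 ?R3) (HL N) (int (M + N)) (E3 M N \<union> trT 1 1 T2)"
    by (rule CI_add_E3[OF ci2 _ M1 odd N2 dis col3[OF N2 l3]]) (use bi in simp)
  have reg: "region (lamMN M N) (True # mu1) = \<Union>(E3 M N) \<union> trs 1 1 ?R3"
    using region3[OF M1 N2 len weakly3_fwd(2)[OF M1 N2 w]] unfolding Union_E3 by simp
  have dT: "E3 M N \<inter> trT 1 1 T2 = {}"
    by (rule E_trT_disj[OF _ dis]) (use ci in \<open>simp add: CI_def\<close>)
  then show "E3 M N \<inter> trT 1 1 T2 = {}" .
  have "typeBI (E3 M N \<union> trT 1 1 T2)"
    using typeBI_E3_Un[OF M1 odd _ dT] Items_finite_T[OF it] bi by simp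
  then show "(True # mu1, E3 M N \<union> trT 1 1 T2) \<in> Items (lamMN M N)"
    unfolding Items_lam_iff reg using ci3 weakly3_fwd(1)[OF M1 N2 w] by simp
qed

lemma (in ustart) valley_A:
  assumes "{(int N, 1 - int N)} \<notin> T"
  shows "Atile M N 1 \<in> T"
proof -
  have "(int N, 1 - int N) \<in> R" using strip_R N1 by simp
  then obtain tau where "tau \<in> T" "(int N, 1 - int N) \<in> tau" using in_some_tile by blast
  then show ?thesis using valley_tile assms by metis
qed

lemma (in ustart) class3_bwd:
  assumes A: "Atile M N 1 \<in> T"
  shows "2 \<le> N" "odd M" "E3 M N \<subseteq> T"
    "(mu1, trT (-1) (-1) (T - E3 M N)) \<in> Items (lamMN (M + 1) (N - 2))"
proof -
  show odd: "odd M" by (rule A_odd[OF A])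
  have B: "Atile M N 3 \<in> T" by (rule B_in[OF A])
  show sub: "E3 M N \<subseteq> T" using strip_T A B by (simp add: E3_def)
  have Bsub: "Atile M N 3 \<subseteq> R" using tileR[OF B] .
  show N2: "2 \<le> N"
  proof (rule ccontr)
    assume "\<not> 2 \<le> N"
    then have N: "N = 1" using N1 by simp
    have "(int N, 3 - int N) \<in> Atile M N 3" by (simp add: mem_Atile)
    then have "(int N, 3 - int N) \<in> R" using Bsub by blast
    then have "3 - int N < 1 + height mu1 (nat (int N - 1))" unfolding inR by blast
    then show False using N by simp
  qed
  let ?R3 = "region (lamMN (M + 1) (N - 2)) mu1"
  let ?T2 = "trT (-1) (-1) (T - E3 M N)"
  have w: "weakly_above mu1 (lamMN (M + 1) (N - 2))" by (rule weakly3_bwd[OF M1 N2 len Bsub])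
  have l3: "length mu1 = M + 1 + (N - 2)" using w by (simp add: weakly_above_def)
  have ci: "CI R (HL N) (int (M + N)) T" and bi: "typeBI T"
    using it unfolding Items_lam_iff by auto
  have reg: "R = \<Union>(E3 M N) \<union> trs 1 1 ?R3"
    using region3[OF M1 N2 len Bsub] unfolding Union_E3 by simp
  have dis: "\<Union>(E3 M N) \<inter> trs 1 1 ?R3 = {}" by (rule disj3[OF N2 l3])
  have ci2: "CI (trs 1 1 ?R3) (\<lambda>a. HL (N - 2) (a - 1) + 1) (int (M + N)) (T - E3 M N)"
  proof (rule CI_remove_E3[OF _ sub N2 dis])
    show "CI (\<Union>(E3 M N) \<union> trs 1 1 ?R3) (HL N) (int (M + N)) T" using ci reg by simp
    fix p assume "p \<in> trs 1 1 ?R3"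
    then show "2 \<le> fst p \<and> HL (N - 2) (fst p - 1) + 1 < snd p" using col3[OF N2 l3] by blast
  qed
  have e: "trT 1 1 ?T2 = T - E3 M N" by simp
  have "CI ?R3 (HL (N - 2)) (int (M + 1 + (N - 2))) ?T2"
    using CI_tr[of 1 1 ?R3 "HL (N - 2)" "int (M + 1 + (N - 2))" ?T2] ci2 N2 e by (simp add: add.commute)
  moreover have "typeBI ?T2"
  proof -
    have "T = E3 M N \<union> (T - E3 M N)" using sub by blast
    then have "typeBI (E3 M N \<union> (T - E3 M N))" using bi by simp
    then have "typeBI (T - E3 M N)" using typeBI_E3_Un[OF M1 odd, of "T - E3 M N" N] finT by auto
    then show ?thesis by simp
  qed
  ultimately show "(mu1, ?T2) \<in> Items (lamMN (M + 1) (N - 2))" unfolding Items_lam_iff using w by simp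
qed

lemma class3_sum:
  assumes M1: "1 \<le> M" and odd: "odd M" and N2: "2 \<le> N"
  shows "(\<Sum>(mu, T) \<in> {(mu, T) \<in> Items (lamMN M N). hd mu = True \<and> {(int N, 1 - int N)} \<notin> T}. monom (1::int) (art T))
    = monom 1 (M + N) * (\<Sum>(mu, T) \<in> Items (lamMN (M + 1) (N - 2)). monom 1 (art T))"
proof -
  let ?g = "\<lambda>(mu1, T1). (True # mu1, E3 M N \<union> trT 1 1 T1)"
  let ?I3 = "{(mu, T) \<in> Items (lamMN M N). hd mu = True \<and> {(int N, 1 - int N)} \<notin> T}"
  let ?J = "Items (lamMN (M + 1) (N - 2))"
  have N1: "1 \<le> N" using N2 by simp
  have inj: "inj_on ?g ?J"
  proof (rule inj_onI)
    fix x y assume x: "x \<in> ?J" and y: "y \<in> ?J" and e: "?g x = ?g y"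
    obtain mx Tx where xx: "x = (mx, Tx)" by fastforce
    obtain my Ty where yy: "y = (my, Ty)" by fastforce
    have d1: "E3 M N \<inter> trT 1 1 Tx = {}" using class3_fwd(2)[OF M1 odd N2] x xx by simp
    have d2: "E3 M N \<inter> trT 1 1 Ty = {}" using class3_fwd(2)[OF M1 odd N2] y yy by simp
    have "E3 M N \<union> trT 1 1 Tx = E3 M N \<union> trT 1 1 Ty" "mx = my" using e xx yy by auto
    then have "(E3 M N \<union> trT 1 1 Tx) - E3 M N = (E3 M N \<union> trT 1 1 Ty) - E3 M N" by simp
    then have "trT 1 1 Tx = trT 1 1 Ty" using d1 d2 by blast
    then have "Tx = Ty" using inj_trT[THEN injD] by blast
    then show "x = y" using xx yy \<open>mx = my\<close> by simp
  qed
  have img: "?I3 = ?g ` ?J"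
  proof (intro set_eqI iffI)
    fix x assume "x \<in> ?I3"
    then obtain mu T where x: "x = (mu, T)" "(mu, T) \<in> Items (lamMN M N)" "hd mu = True" "{(int N, 1 - int N)} \<notin> T"
      by auto
    then have "length mu = M + N" by (simp add: Items_def weakly_above_def)
    then obtain mu1 where mu: "mu = True # mu1" using x(3) N1 by (cases mu) auto
    interpret ustart M N mu1 T using M1 N1 x(2) mu by unfold_locales simp_all
    have A: "Atile M N 1 \<in> T" by (rule valley_A[OF x(4)])
    have "(mu1, trT (-1) (-1) (T - E3 M N)) \<in> ?J" using class3_bwd(4)[OF A] .
    moreover have "?g (mu1, trT (-1) (-1) (T - E3 M N)) = x" using class3_bwd(3)[OF A] x mu by auto
    ultimately show "x \<in> ?g ` ?J" by force
  next
    fix x assume "x \<in> ?g ` ?J"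
    then obtain mu1 T1 where x: "x = ?g (mu1, T1)" "(mu1, T1) \<in> ?J" by auto
    let ?T = "E3 M N \<union> trT 1 1 T1"
    have it: "(True # mu1, ?T) \<in> Items (lamMN M N)" using class3_fwd(1)[OF M1 odd N2 x(2)] .
    have "{(int N, 1 - int N)} \<notin> ?T"
    proof
      assume v: "{(int N, 1 - int N)} \<in> ?T"
      have A: "Atile M N 1 \<in> ?T" by (simp add: E3_def)
      have P: "partition_on (region (lamMN M N) (True # mu1)) ?T" using it unfolding Items_iff CI_def by blast
      have m: "(int N, 1 - int N) \<in> Atile M N 1" by (simp add: mem_Atile)
      have "{(int N, 1 - int N)} = Atile M N 1"
        by (rule partition_same[OF P v A _ m]) simp
      then have "card (Atile M N 1) = card {(int N, 1 - int N)}" by simp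
      then show False using card_Atile[of M N 1] M1 by simp
    qed
    then show "x \<in> ?I3" using it x(1) by simp
  qed
  have art: "art (E3 M N \<union> trT 1 1 T1) = (M + N) + art T1" if "(mu1, T1) \<in> ?J" for mu1 T1
  proof -
    have "art (E3 M N \<union> trT 1 1 T1) = (M + N) + art (trT 1 1 T1)"
      by (rule art_Un) (use that class3_fwd(2)[OF M1 odd N2 that] Items_finite_T[OF that] sum_wt_E3[OF M1 N1] in auto)
    then show ?thesis by simp
  qed
  have "(\<Sum>(mu, T) \<in> ?I3. monom (1::int) (art T)) = (\<Sum>x \<in> ?J. monom 1 (art (snd (?g x))))"
    unfolding img by (subst sum.reindex[OF inj]) (simp add: case_prod_beta)
  also have "\<dots> = (\<Sum>x \<in> ?J. monom 1 (M + N) * monom 1 (art (snd x)))"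
  proof (rule sum.cong[OF refl])
    fix x assume "x \<in> ?J"
    then show "monom 1 (art (snd (?g x))) = monom 1 (M + N) * monom (1::int) (art (snd x))"
      using art[of "fst x" "snd x"] by (simp add: case_prod_beta monom_add_mult)
  qed
  also have "\<dots> = monom 1 (M + N) * (\<Sum>(mu, T) \<in> ?J. monom 1 (art T))"
    by (simp add: sum_distrib_left case_prod_beta)
  finally show ?thesis .
qed

lemma class3_empty:
  assumes M1: "1 \<le> M" and N1: "1 \<le> N" and c: "even M \<or> N < 2"
  shows "{(mu, T) \<in> Items (lamMN M N). hd mu = True \<and> {(int N, 1 - int N)} \<notin> T} = {}"
proof (rule ccontr)
  assume "\<not> ?thesis"
  then obtain mu T where x: "(mu, T) \<in> Items (lamMN M N)" "hd mu = True" "{(int N, 1 - int N)} \<notin> T" by auto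
  then have "length mu = M + N" by (simp add: Items_def weakly_above_def)
  then obtain mu1 where mu: "mu = True # mu1" using x(2) N1 by (cases mu) auto
  interpret ustart M N mu1 T using M1 N1 x(1) mu by unfold_locales simp_all
  have A: "Atile M N 1 \<in> T" by (rule valley_A[OF x(3)])
  show False using class3_bwd(1,2)[OF A] c by simp
qed

theorem mainTheorem6:
  fixes M N :: nat
  assumes "M \<ge> 1" and "N \<ge> 1"
  shows "PMN M N =
    (if even M then PMN M (N - 1) + monom 1 N * PMN (M - 1) N
     else PMN M (N - 1) + monom 1 N * PMN (M - 1) N
          + (if N \<ge> 2 then monom 1 (M + N) * PMN (M + 1) (N - 2) else 0))"
proof -
  let ?I = "Items (lamMN M N)"
  let ?f = "\<lambda>(mu, T). monom (1::int) (art T)"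
  let ?v = "{(int N, 1 - int N)}"
  let ?ID = "{(mu, T) \<in> ?I. hd mu = False}"
  let ?I2 = "{(mu, T) \<in> ?I. hd mu = True \<and> ?v \<in> T}"
  let ?I3 = "{(mu, T) \<in> ?I. hd mu = True \<and> ?v \<notin> T}"
  have fin: "finite ?I" by (rule finite_Items)
  have split: "?I = ?ID \<union> (?I2 \<union> ?I3)" by auto
  have s1: "sum ?f ?I = sum ?f ?ID + sum ?f (?I2 \<union> ?I3)"
    by (subst split, rule sum.union_disjoint) (use fin in \<open>auto intro: finite_subset\<close>)
  have s2: "sum ?f (?I2 \<union> ?I3) = sum ?f ?I2 + sum ?f ?I3"
    by (rule sum.union_disjoint) (use fin in \<open>auto intro: finite_subset\<close>)
  have lam: "lamMN M N = False # lamMN M (N - 1)" using lam_Suc[of M "N - 1"] assms(2) by simp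
  have D: "sum ?f ?ID = PMN M (N - 1)"
    unfolding PMN_Items lam using class1_sum[of False "lamMN M (N - 1)"] by simp
  have C2: "sum ?f ?I2 = monom 1 N * PMN (M - 1) N"
    unfolding PMN_Items using class2_sum[OF assms] by simp
  have C3: "sum ?f ?I3 = (if odd M \<and> N \<ge> 2 then monom 1 (M + N) * PMN (M + 1) (N - 2) else 0)"
  proof (cases "odd M \<and> N \<ge> 2")
    case True
    then show ?thesis unfolding PMN_Items using class3_sum[OF assms(1)] by simp
  next
    case False
    then have e: "?I3 = {}" using class3_empty[OF assms] by auto
    have "sum ?f ?I3 = 0" unfolding e by simp
    moreover have "(if odd M \<and> N \<ge> 2 then monom 1 (M + N) * PMN (M + 1) (N - 2) else 0) = 0"
      using False by (rule if_not_P)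
    ultimately show ?thesis by simp
  qed
  have "PMN M N = sum ?f ?ID + sum ?f ?I2 + sum ?f ?I3"
    using PMN_Items[of M N] s1 s2 by (simp add: add.assoc)
  then have "PMN M N = PMN M (N - 1) + monom 1 N * PMN (M - 1) N
      + (if odd M \<and> N \<ge> 2 then monom 1 (M + N) * PMN (M + 1) (N - 2) else 0)"
    by (simp only: D C2 C3)
  then show ?thesis by auto
qed

end
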